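(* Let $0=x_1<\dots<x_N=1$ be a partition of $I=[0,1]$, let $\{q_n\}$ be a sequence in $(0,1]$ with $\lim q_n=1$, and let $\alpha_i$, $i\in\mathbb{N}_{N-1}$, be bounded functions on $I$ with $\|\alpha_i\|_\infty<1$. Let $\{\lambda_i\}_{i\ge1}$ be a sequence of distinct positive real numbers with $\sum_{i=1}^\infty\frac{\lambda_i}{\lambda_i^2+1}=\infty$. Then the set \[ S=\bigcup_{n=1}^\infty\bigcup_{m=1}^\infty\operatorname{span}\{1,(x^{\lambda_1})^{(q_n,\alpha)}_n,\dots,(x^{\lambda_m})^{(q_n,\alpha)}_n\} \] is dense in $C[0,1]$ with respect to the sup-norm (i.e. every $f\in C[0,1]$ is a uniform limit of elements of $S$).
   Context: For $q\in(0,1]$: $[k]_q=\frac{1-q^k}{1-q}$ ($q\ne1$), $[k]_1=k$, $q$-factorials, $\binom{n}{k}_q=\frac{[n]_q!}{[k]_q![n-k]_q!}$. On $[0,1]$ the quantum MKZ operator is $M_{n,q}h(x)=\prod_{j=0}^n(1-q^jx)\sum_{k\ge0}\binom{n+k}{k}_q x^k h\!\left(\frac{[k]_q}{[k+n]_q}\right)$ for $0\le x<1$, $M_{n,q}h(1)=h(1)$. Let $u_i(x)=a_ix+b_i$ be the affine maps with $u_i(0)=x_i$, $u_i(1)=x_{i+1}$, $i\in\mathbb{N}_{N-1}$. For $h\in C[0,1]$, $h^{(q,\alpha)}_n$ denotes the unique bounded function $G:[0,1]\to\mathbb{R}$ with $G(u_i(x))=h(u_i(x))+\alpha_i(x)(G(x)-M_{n,q}h(x))$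 for all $x\in I$, $i\in\mathbb{N}_{N-1}$; $(x^{\lambda})^{(q,\alpha)}_n$ is this function for $h(x)=x^\lambda$. *)

theory Defs
  imports "HOL-Analysis.Analysis"
begin

definition q_int :: "real \<Rightarrow> nat \<Rightarrow> real" where
  "q_int q k = (if q = 1 then real k else (1 - q ^ k) / (1 - q))"

definition q_fact :: "real \<Rightarrow> nat \<Rightarrow> real" where
  "q_fact q n = (\<Prod>k = 1..n. q_int q k)"

definition q_binom :: "real \<Rightarrow> nat \<Rightarrow> nat \<Rightarrow> real" where
  "q_binom q n k = q_fact q n / (q_fact q k * q_fact q (n - k))"

definition MKZ :: "nat \<Rightarrow> real \<Rightarrow> (real \<Rightarrow> real) \<Rightarrow> real \<Rightarrow> real" where
  "MKZ n q h x =
     (if x = 1 then h 1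
      else (\<Prod>j = 0..n. (1 - q ^ j * x)) *
           (\<Sum>k. q_binom q (n + k) k * x ^ k * h (q_int q k / q_int q (k + n))))"

definition affine_u :: "(nat \<Rightarrow> real) \<Rightarrow> nat \<Rightarrow> real \<Rightarrow> real" where
  "affine_u xs i t = (xs (Suc i) - xs i) * t + xs i"

text \<open>The alpha-fractal function h^(q,alpha)_n associated with the partition xs (points
  xs 1 < ... < xs N) and scaling functions alpha i, i = 1..N-1: the unique bounded function
  G on [0,1] satisfying the self-referential equation.  Outside [0,1] it is fixed to 0
  (functions are only considered on [0,1]).\<close>

definition fractal_fun ::
  "nat \<Rightarrow> (nat \<Rightarrow> real) \<Rightarrow> (nat \<Rightarrow> real \<Rightarrow> real) \<Rightarrow> real \<Rightarrow> nat \<Rightarrow> (real \<Rightarrow> real) \<Rightarrow> real \<Rightarrow> real"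
where
  "fractal_fun N xs \<alpha> q n h =
     (THE G. bounded (G ` {0..1}) \<and> (\<forall>x. x \<notin> {0..1} \<longrightarrow> G x = 0) \<and>
        (\<forall>i \<in> {1..N-1}. \<forall>x \<in> {0..1}.
           G (affine_u xs i x) = h (affine_u xs i x) + \<alpha> i x * (G x - MKZ n q h x)))"

end

theory Submission
  imports Defs "HOL-Complex_Analysis.Complex_Analysis"
begin

lemma schwarz_zero:
  fixes g :: "complex \<Rightarrow> complex"
  assumes holg: "g holomorphic_on ball 0 1" and bd: "\<And>z. z \<in> ball 0 1 \<Longrightarrow> norm (g z) \<le> 1"
    and a: "norm a < 1" and ga: "g a = 0" and w: "norm w < 1"
  shows "norm (g w) \<le> norm (Moebius_function 0 a w)"
proof -
  define k where "k = g \<circ> Moebius_function 0 (-a)"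
  have na: "norm (-a) < 1" using a by simp
  have mapsto: "Moebius_function 0 (-a) ` ball 0 1 \<subseteq> ball 0 1"
    using Moebius_function_norm_lt_1[OF na] by auto
  have holk: "k holomorphic_on ball 0 1"
    unfolding k_def
    by (rule holomorphic_on_compose_gen[OF Moebius_function_holomorphic[OF na] holg mapsto])
  have k0: "k 0 = 0" unfolding k_def using ga by (simp add: Moebius_function_of_zero)
  have kb: "norm (k z) \<le> 1" if "norm z < 1" for z
    unfolding k_def using bd Moebius_function_norm_lt_1[OF na that] by auto
  define \<xi> where "\<xi> = Moebius_function 0 a w"
  have nxi: "norm \<xi> < 1" unfolding \<xi>_def by (rule Moebius_function_norm_lt_1[OF a w])
  have kxi: "k \<xi> = g w" unfolding k_def \<xi>_def
    using Moebius_function_compose[of "-a" a w] a w by simp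
  have "s * norm (k \<xi>) \<le> norm \<xi>" if s: "0 < s" "s < 1" for s
  proof -
    have "norm ((\<lambda>z. of_real s * k z) \<xi>) \<le> norm \<xi>"
    proof (rule Schwarz_Lemma(1))
      show "(\<lambda>z. of_real s * k z) holomorphic_on ball 0 1"
        by (intro holomorphic_intros holk)
      show "of_real s * k 0 = 0" by (simp add: k0)
      show "norm (of_real s * k z) < 1" if "norm z < 1" for z
      proof -
        have "norm (of_real s * k z) = s * norm (k z)" using s by (simp add: norm_mult)
        also have "\<dots> \<le> s * 1" using kb[OF that] s by (intro mult_left_mono) auto
        finally show ?thesis using s by simp
      qed
    qed (use nxi in auto)
    then show ?thesis using s by (simp add: norm_mult)
  qed
  then have "norm (k \<xi>) \<le> norm \<xi>"
  proof -
    assume H: "\<And>s. 0 < s \<Longrightarrow> s < 1 \<Longrightarrow> s * norm (k \<xi>) \<le> norm \<xi>"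
    show ?thesis
    proof (rule ccontr)
      assume "\<not> ?thesis"
      then have lt: "norm \<xi> < norm (k \<xi>)" by simp
      define s where "s = (norm \<xi> / norm (k \<xi>) + 1) / 2"
      have pk: "norm (k \<xi>) > 0" using lt norm_ge_zero[of \<xi>] by linarith
      have r: "norm \<xi> / norm (k \<xi>) < 1" using lt pk by simp
      have z0: "0 \<le> norm \<xi> / norm (k \<xi>)" by simp
      have "0 < s" unfolding s_def by (intro divide_pos_pos add_nonneg_pos z0) auto
      moreover have "s < 1" unfolding s_def using r by (simp add: field_simps)
      ultimately have "0 < s" "s < 1" by auto
      from H[OF this] have "s * norm (k \<xi>) \<le> norm \<xi>" .
      moreover have "s * norm (k \<xi>) = (norm \<xi> + norm (k \<xi>)) / 2"
        unfolding s_def using pk by (simp add: field_simps)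
      ultimately show False using lt by simp
    qed
  qed
  then show ?thesis using kxi \<xi>_def by simp
qed

lemma schwarz_iter:
  fixes A :: "complex set"
  assumes "finite A"
  shows "\<And>g. g holomorphic_on ball 0 1 \<Longrightarrow> (\<And>z. z \<in> ball 0 1 \<Longrightarrow> norm (g z) \<le> 1) \<Longrightarrow>
    A \<subseteq> ball 0 1 \<Longrightarrow> (\<And>a. a \<in> A \<Longrightarrow> g a = 0) \<Longrightarrow> w \<in> ball 0 1 \<Longrightarrow>
    norm (g w) \<le> (\<Prod>a\<in>A. norm (Moebius_function 0 a w))"
  using assms
proof (induction A rule: finite_induct)
  case empty
  then show ?case by simp
next
  case (insert a A g)
  have a: "norm a < 1" using insert.prems(3) by auto
  have nz: "1 - cnj a * z \<noteq> 0" if "norm z < 1" for z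
  proof
    assume "1 - cnj a * z = 0"
    then have "norm (cnj a * z) = 1" by (metis eq_iff_diff_eq_0 norm_one)
    moreover have "norm (cnj a * z) < 1"
    proof -
      have "norm a * norm z \<le> norm a" using mult_left_le[of "norm z" "norm a"] that by simp
      then show ?thesis using a by (simp add: norm_mult)
    qed
    ultimately show False by simp
  qed
  define P where "P = (\<lambda>z. if z = a then deriv g a else (g z - g a) / (z - a))"
  define h where "h = (\<lambda>z. P z * (1 - cnj a * z))"
  have holP: "P holomorphic_on ball 0 1" unfolding P_def
    by (rule pole_lemma[OF insert.prems(1)]) (use a in auto)
  have holh: "h holomorphic_on ball 0 1" unfolding h_def by (intro holomorphic_intros holP)
  have ga: "g a = 0" using insert.prems(4) by auto
  have hform: "h z = g z / Moebius_function 0 a z" if "z \<noteq> a" "norm z < 1" for z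
    using that nz[OF that(2)] ga by (simp add: h_def P_def Moebius_function_def)
  have mobnz: "Moebius_function 0 a z \<noteq> 0" if "z \<noteq> a" "norm z < 1" for z
    using that nz[OF that(2)] by (simp add: Moebius_function_def)
  have hb1: "norm (h z) \<le> 1" if "z \<noteq> a" "norm z < 1" for z
  proof -
    have "norm (g z) \<le> norm (Moebius_function 0 a z)"
      by (rule schwarz_zero[OF insert.prems(1,2) a ga that(2)])
    then show ?thesis using hform[OF that] mobnz[OF that] by (simp add: norm_divide divide_le_eq_1)
  qed
  have hb: "norm (h z) \<le> 1" if "z \<in> ball 0 1" for z
  proof (cases "z = a")
    case False then show ?thesis using hb1 that by auto
  next
    case True
    have "isCont h a" using holh a
      by (meson centre_in_ball continuous_on_eq_continuous_at holomorphic_on_imp_continuous_on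
          mem_ball_0 open_ball zero_less_one)
    then have lim: "(h \<longlongrightarrow> h a) (at a)" by (simp add: isCont_def)
    have ev: "eventually (\<lambda>z. norm (h z) \<le> 1) (at a)"
    proof -
      have "eventually (\<lambda>z. z \<in> ball 0 1) (at a)"
        using a by (intro eventually_at_in_open') auto
      moreover have "eventually (\<lambda>z. z \<noteq> a) (at a)" by (simp add: eventually_at_filter)
      ultimately show ?thesis by eventually_elim (use hb1 in auto)
    qed
    have "norm (h a) \<le> 1"
      by (rule tendsto_upperbound[OF tendsto_norm[OF lim] ev]) simp
    then show ?thesis using True by simp
  qed
  have hA: "h b = 0" if "b \<in> A" for b
  proof -
    have "b \<noteq> a" using that insert.hyps by auto
    moreover have "norm b < 1" using insert.prems(3) that by auto
    ultimately show ?thesis using hform insert.prems(4) that by auto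
  qed
  have IH: "norm (h w) \<le> (\<Prod>a\<in>A. norm (Moebius_function 0 a w))"
    by (rule insert.IH[OF holh hb _ hA insert.prems(5)]) (use insert.prems(3) in auto)
  show ?case
  proof (cases "w = a")
    case True then show ?thesis using ga by (simp add: prod_nonneg)
  next
    case False
    have nw: "norm w < 1" using insert.prems(5) by auto
    have "g w = h w * Moebius_function 0 a w" using hform[OF False nw] mobnz[OF False nw] by simp
    then have "norm (g w) = norm (Moebius_function 0 a w) * norm (h w)" by (simp add: norm_mult)
    also have "\<dots> \<le> norm (Moebius_function 0 a w) * (\<Prod>a\<in>A. norm (Moebius_function 0 a w))"
      by (intro mult_left_mono IH) auto
    finally show ?thesis using insert.hyps by simp
  qed
qed

definition mom :: "(real \<times> real) list \<Rightarrow> real \<Rightarrow> real" where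
  "mom \<nu> l = (\<Sum>p\<leftarrow>\<nu>. fst p * snd p powr l)"
definition tot :: "(real \<times> real) list \<Rightarrow> real" where
  "tot \<nu> = (\<Sum>p\<leftarrow>\<nu>. \<bar>fst p\<bar>)"
definition adm :: "(real \<times> real) list \<Rightarrow> bool" where
  "adm \<nu> \<longleftrightarrow> (\<forall>p\<in>set \<nu>. snd p \<in> {0..1}) \<and> tot \<nu> \<le> 1"
definition comb :: "real \<Rightarrow> (real \<times> real) list \<Rightarrow> (real \<times> real) list \<Rightarrow> (real \<times> real) list" where
  "comb u \<nu> \<nu>' = map (\<lambda>p. ((1-u)*fst p, snd p)) \<nu> @ map (\<lambda>p. (u * fst p, snd p)) \<nu>'"

lemma mom_comb: "mom (comb u \<nu> \<nu>') l = (1-u) * mom \<nu> l + u * mom \<nu>' l"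
  by (simp add: mom_def comb_def o_def sum_list_const_mult mult.assoc)

lemma tot_comb: "0 \<le> u \<Longrightarrow> u \<le> 1 \<Longrightarrow> tot (comb u \<nu> \<nu>') = (1-u) * tot \<nu> + u * tot \<nu>'"
  by (simp add: tot_def comb_def o_def sum_list_const_mult abs_mult)

lemma adm_comb: assumes "adm \<nu>" "adm \<nu>'" "0 \<le> u" "u \<le> 1" shows "adm (comb u \<nu> \<nu>')"
proof -
  have "tot (comb u \<nu> \<nu>') \<le> (1-u) * 1 + u * 1"
    unfolding tot_comb[OF assms(3,4)]
    using assms unfolding adm_def by (intro add_mono mult_left_mono) auto
  then show ?thesis using assms unfolding adm_def comb_def by auto
qed

lemma abs_mom_le: "\<forall>p\<in>set \<nu>. snd p \<in> {0..1} \<Longrightarrow> 0 \<le> l \<Longrightarrow> \<bar>mom \<nu> l\<bar> \<le> tot \<nu>"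
proof (induction \<nu>)
  case Nil then show ?case by (simp add: mom_def tot_def)
next
  case (Cons p \<nu>)
  have "snd p powr l \<le> 1" using Cons.prems by (simp add: powr_le1)
  then have "\<bar>fst p * snd p powr l\<bar> \<le> \<bar>fst p\<bar>"
    by (simp add: abs_mult mult_left_le)
  then show ?case using Cons by (simp add: mom_def tot_def abs_triangle_ineq[THEN order_trans])
qed

lemma abs_mom_adm: "adm \<nu> \<Longrightarrow> 0 \<le> l \<Longrightarrow> \<bar>mom \<nu> l\<bar> \<le> 1"
  using abs_mom_le[of \<nu> l] unfolding adm_def by auto

lemma muntz_sep:
  fixes K :: "real set" and \<mu> D :: real
  assumes K: "finite K" "K \<subseteq> {0<..}" and mu: "\<mu> > 0" "\<mu> \<notin> K" and D: "D > 0"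
    and hyp: "\<And>b. \<exists>t\<in>{0..1}. D \<le> \<bar>t powr \<mu> - (\<Sum>l\<in>K. b l * t powr l)\<bar>"
    and eta: "\<eta> > 0"
  shows "\<exists>\<nu>. adm \<nu> \<and> (\<forall>l\<in>K. \<bar>mom \<nu> l\<bar> < \<eta>) \<and> \<bar>mom \<nu> \<mu> - D\<bar> < \<eta>"
proof -
  define \<Phi> where "\<Phi> \<nu> = (\<Sum>l\<in>K. (mom \<nu> l)\<^sup>2) + (mom \<nu> \<mu> - D)\<^sup>2" for \<nu>
  have small: "\<exists>\<nu>. adm \<nu> \<and> \<Phi> \<nu> < e" if e: "e > 0" for e
  proof (rule ccontr)
    assume "\<not> ?thesis"
    then have ge: "\<And>\<nu>. adm \<nu> \<Longrightarrow> e \<le> \<Phi> \<nu>" by force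
    define M where "M = {\<nu>. adm \<nu>}"
    have Mne: "[] \<in> M" by (simp add: M_def adm_def tot_def)
    define \<delta> where "\<delta> = Inf (\<Phi> ` M)"
    have bdd: "bdd_below (\<Phi> ` M)" using ge unfolding M_def by (intro bdd_belowI[of _ e]) auto
    have \<delta>ge: "e \<le> \<delta>" unfolding \<delta>_def using Mne ge
      by (intro cInf_greatest) (auto simp: M_def)
    have \<delta>le: "\<delta> \<le> \<Phi> \<nu>" if "adm \<nu>" for \<nu>
      unfolding \<delta>_def using that bdd by (intro cInf_lower) (auto simp: M_def)
    have \<delta>pos: "\<delta> > 0" using e \<delta>ge by simp
    define C where "C = real (card K) + 1"
    have Cpos: "C \<ge> 1" by (simp add: C_def)
    define u where "u = \<delta> / (8 * C + 8 * \<delta>)"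
    have upos: "u > 0" unfolding u_def using \<delta>pos Cpos by simp
    have ule: "u \<le> 1" unfolding u_def using \<delta>pos Cpos by (simp add: field_simps)
    have uC: "2 * u * C \<le> \<delta> / 4" unfolding u_def using \<delta>pos Cpos by (simp add: field_simps)
    define \<epsilon> where "\<epsilon> = u * \<delta> / 2"
    have \<epsilon>pos: "\<epsilon> > 0" unfolding \<epsilon>_def using upos \<delta>pos by simp
    obtain \<nu>0 where \<nu>0M: "\<nu>0 \<in> M" and \<nu>0lt: "\<Phi> \<nu>0 < \<delta> + \<epsilon>"
    proof -
      have "Inf (\<Phi> ` M) < \<delta> + \<epsilon>" using \<epsilon>pos \<delta>_def by simp
      then obtain v where "v \<in> \<Phi> ` M" "v < \<delta> + \<epsilon>"
        using cInf_lessD[of "\<Phi> ` M"] Mne by blast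
      then show ?thesis using that by auto
    qed
    have adm0: "adm \<nu>0" using \<nu>0M by (simp add: M_def)
    define a where "a l = (if l = \<mu> then mom \<nu>0 \<mu> - D else mom \<nu>0 l)" for l
    define g where "g t = (\<Sum>l\<in>K. a l * t powr l) + a \<mu> * t powr \<mu>" for t
    have A2: "\<Phi> \<nu>0 = (\<Sum>l\<in>K. (a l)\<^sup>2) + (a \<mu>)\<^sup>2"
      unfolding \<Phi>_def a_def using mu(2) by (auto intro!: sum.cong)
    have key: "(\<Sum>l\<in>K. a l * mom \<nu> l) + a \<mu> * mom \<nu> \<mu> > a \<mu> * D + \<delta> / 2"
      if adm: "adm \<nu>" for \<nu>
    proof -
      define x where "x l = mom \<nu> l" for l
      define y where "y l = mom \<nu>0 l" for l
      have ex: "mom (comb u \<nu>0 \<nu>) l = y l + u * (x l - y l)" for l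
        unfolding mom_comb x_def y_def by (simp add: algebra_simps)
      have "\<delta> \<le> \<Phi> (comb u \<nu>0 \<nu>)" by (rule \<delta>le[OF adm_comb[OF adm0 adm]]) (use upos ule in auto)
      also have "\<Phi> (comb u \<nu>0 \<nu>) = \<Phi> \<nu>0 + 2 * u * ((\<Sum>l\<in>K. a l * (x l - y l)) + a \<mu> * (x \<mu> - y \<mu>))
          + u\<^sup>2 * ((\<Sum>l\<in>K. (x l - y l)\<^sup>2) + (x \<mu> - y \<mu>)\<^sup>2)"
      proof -
        have "(\<Sum>l\<in>K. (y l + u * (x l - y l))\<^sup>2) = (\<Sum>l\<in>K. (y l)\<^sup>2 + 2 * u * (a l * (x l - y l)) + u\<^sup>2 * (x l - y l)\<^sup>2)"
          using mu(2) by (intro sum.cong) (auto simp: a_def y_def power2_eq_square algebra_simps)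
        also have "\<dots> = (\<Sum>l\<in>K. (y l)\<^sup>2) + 2 * u * (\<Sum>l\<in>K. a l * (x l - y l)) + u\<^sup>2 * (\<Sum>l\<in>K. (x l - y l)\<^sup>2)"
          by (simp add: sum.distrib sum_distrib_left)
        finally have s1: "(\<Sum>l\<in>K. (y l + u * (x l - y l))\<^sup>2) = \<dots>" .
        have s2: "(y \<mu> + u * (x \<mu> - y \<mu>) - D)\<^sup>2 = (y \<mu> - D)\<^sup>2 + 2 * u * (a \<mu> * (x \<mu> - y \<mu>)) + u\<^sup>2 * (x \<mu> - y \<mu>)\<^sup>2"
          by (simp add: a_def y_def power2_eq_square algebra_simps)
        show ?thesis unfolding \<Phi>_def ex s1 s2 by (simp add: y_def algebra_simps)
      qed
      finally have ineq: "\<delta> \<le> \<Phi> \<nu>0 + 2 * u * ((\<Sum>l\<in>K. a l * (x l - y l)) + a \<mu> * (x \<mu> - y \<mu>))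
          + u\<^sup>2 * ((\<Sum>l\<in>K. (x l - y l)\<^sup>2) + (x \<mu> - y \<mu>)\<^sup>2)" .
      have bx: "\<bar>x l\<bar> \<le> 1" "\<bar>y l\<bar> \<le> 1" if "l \<in> insert \<mu> K" for l
        using abs_mom_adm[OF adm, of l] abs_mom_adm[OF adm0, of l] that K mu unfolding x_def y_def by auto
      have sq: "(x l - y l)\<^sup>2 \<le> 4" if "l \<in> insert \<mu> K" for l
      proof -
        have "\<bar>x l - y l\<bar> \<le> 2" using bx[OF that] by linarith
        then have "\<bar>x l - y l\<bar>\<^sup>2 \<le> 2\<^sup>2" by (intro power_mono) auto
        then show ?thesis by simp
      qed
      have Q: "(\<Sum>l\<in>K. (x l - y l)\<^sup>2) + (x \<mu> - y \<mu>)\<^sup>2 \<le> 4 * C"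
      proof -
        have "(\<Sum>l\<in>K. (x l - y l)\<^sup>2) \<le> (\<Sum>l\<in>K. 4)" by (intro sum_mono sq) auto
        then show ?thesis using sq[of \<mu>] by (simp add: C_def algebra_simps)
      qed
      define S where "S = (\<Sum>l\<in>K. a l * (x l - y l)) + a \<mu> * (x \<mu> - y \<mu>)"
      have "\<delta> < \<delta> + \<epsilon> + 2 * u * S + u\<^sup>2 * (4 * C)"
      proof -
        have "u\<^sup>2 * ((\<Sum>l\<in>K. (x l - y l)\<^sup>2) + (x \<mu> - y \<mu>)\<^sup>2) \<le> u\<^sup>2 * (4 * C)"
          by (intro mult_left_mono Q) auto
        then show ?thesis using ineq \<nu>0lt unfolding S_def by linarith
      qed
      then have "0 < \<epsilon> + 2 * u * S + u\<^sup>2 * (4 * C)" by linarith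
      then have "0 < u * (\<delta> / 2 + 2 * S + u * (4 * C))" unfolding \<epsilon>_def by (simp add: power2_eq_square algebra_simps)
      then have "0 < \<delta> / 2 + 2 * S + u * (4 * C)" using upos by (simp add: zero_less_mult_iff)
      then have Sgt: "S > - \<delta> / 2" using uC by linarith
      have ay: "(\<Sum>l\<in>K. a l * y l) + a \<mu> * y \<mu> = \<Phi> \<nu>0 + a \<mu> * D"
      proof -
        have "(\<Sum>l\<in>K. a l * y l) = (\<Sum>l\<in>K. (a l)\<^sup>2)"
          using mu(2) by (intro sum.cong) (auto simp: a_def y_def power2_eq_square)
        then show ?thesis unfolding A2 by (simp add: a_def y_def power2_eq_square algebra_simps)
      qed
      have "(\<Sum>l\<in>K. a l * x l) + a \<mu> * x \<mu> = S + ((\<Sum>l\<in>K. a l * y l) + a \<mu> * y \<mu>)"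
        unfolding S_def by (simp add: algebra_simps sum_subtractf)
      also have "\<dots> = S + \<Phi> \<nu>0 + a \<mu> * D" using ay by simp
      finally have "(\<Sum>l\<in>K. a l * x l) + a \<mu> * x \<mu> = S + \<Phi> \<nu>0 + a \<mu> * D" .
      moreover have "\<Phi> \<nu>0 \<ge> \<delta>" by (rule \<delta>le[OF adm0])
      ultimately show ?thesis using Sgt unfolding x_def by linarith
    qed
    have gpt: "\<bar>g t\<bar> < - a \<mu> * D - \<delta> / 2" if t: "t \<in> {0..1}" for t
    proof -
      have m1: "mom [(1, t)] l = t powr l" for l by (simp add: mom_def)
      have m2: "mom [(-1, t)] l = - (t powr l)" for l by (simp add: mom_def)
      have a1: "adm [(1,t)]" "adm [(-1,t)]" using t by (auto simp: adm_def tot_def)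
      have "g t > a \<mu> * D + \<delta> / 2" using key[OF a1(1)] unfolding m1 g_def .
      moreover have "- g t > a \<mu> * D + \<delta> / 2" using key[OF a1(2)] unfolding m2 g_def
        by (simp add: sum_negf)
      ultimately show ?thesis by linarith
    qed
    have amu: "a \<mu> < 0"
    proof -
      have "0 < - a \<mu> * D - \<delta> / 2" using gpt[of 0] by simp
      then have "0 < - a \<mu> * D" using \<delta>pos by linarith
      then show ?thesis using D by (simp add: mult_less_0_iff)
    qed
    define b where "b l = - a l / a \<mu>" for l
    obtain t where t: "t \<in> {0..1}" and tD: "D \<le> \<bar>t powr \<mu> - (\<Sum>l\<in>K. b l * t powr l)\<bar>"
      using hyp[of b] by blast
    have "t powr \<mu> - (\<Sum>l\<in>K. b l * t powr l) = g t / a \<mu>"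
      using amu unfolding b_def g_def by (simp add: field_simps sum_divide_distrib sum_distrib_left sum_negf)
    then have "\<bar>t powr \<mu> - (\<Sum>l\<in>K. b l * t powr l)\<bar> = \<bar>g t\<bar> / (- a \<mu>)"
      using amu by (simp add: abs_div abs_of_neg)
    also have "\<dots> < (- a \<mu> * D - \<delta> / 2) / (- a \<mu>)"
      using gpt[OF t] amu by (intro divide_strict_right_mono) auto
    also have "\<dots> \<le> D" using amu \<delta>pos by (simp add: field_simps)
    finally show False using tD by simp
  qed
  obtain \<nu> where adm: "adm \<nu>" and \<Phi>lt: "\<Phi> \<nu> < \<eta>\<^sup>2" using small[of "\<eta>\<^sup>2"] eta by auto
  have sq_lt: "\<bar>z\<bar> < \<eta>" if "z\<^sup>2 < \<eta>\<^sup>2" for z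
    using that eta by (metis abs_of_pos power2_abs power_less_imp_less_base abs_ge_zero)
  have "\<forall>l\<in>K. \<bar>mom \<nu> l\<bar> < \<eta>"
  proof
    fix l assume l: "l \<in> K"
    have "(mom \<nu> l)\<^sup>2 \<le> (\<Sum>l\<in>K. (mom \<nu> l)\<^sup>2)"
      using l K(1) by (intro member_le_sum) auto
    then have "(mom \<nu> l)\<^sup>2 < \<eta>\<^sup>2" using \<Phi>lt unfolding \<Phi>_def by (smt (verit) zero_le_power2)
    then show "\<bar>mom \<nu> l\<bar> < \<eta>" by (rule sq_lt)
  qed
  moreover have "\<bar>mom \<nu> \<mu> - D\<bar> < \<eta>"
  proof -
    have "(\<Sum>l\<in>K. (mom \<nu> l)\<^sup>2) \<ge> 0" by (intro sum_nonneg) auto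
    then have "(mom \<nu> \<mu> - D)\<^sup>2 < \<eta>\<^sup>2" using \<Phi>lt unfolding \<Phi>_def by linarith
    then show ?thesis by (rule sq_lt)
  qed
  ultimately show ?thesis using adm by blast
qed

definition pwc :: "real \<Rightarrow> complex \<Rightarrow> complex" where
  "pwc t z = (if t = 0 then 0 else exp (z * of_real (ln t)))"
definition cay :: "complex \<Rightarrow> complex" where
  "cay w = (1 + w) / (1 - w)"
definition Gm :: "(real \<times> real) list \<Rightarrow> complex \<Rightarrow> complex" where
  "Gm \<nu> w = (\<Sum>p\<leftarrow>\<nu>. of_real (fst p) * pwc (snd p) (cay w))"

lemma cay_re: assumes "norm w < 1" shows "Re (cay w) > 0"
proof -
  have w1: "w \<noteq> 1" using assms by auto
  have "Re (cay w) = (1 - (Re w)\<^sup>2 - (Im w)\<^sup>2) / ((Re (1 - w))\<^sup>2 + (Im (1 - w))\<^sup>2)"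
    unfolding cay_def Re_divide by (simp add: power2_eq_square algebra_simps)
  moreover have "(Re w)\<^sup>2 + (Im w)\<^sup>2 < 1"
  proof -
    have "(cmod w)\<^sup>2 < 1" using assms by (simp add: abs_square_less_1)
    then show ?thesis by (simp add: cmod_power2)
  qed
  moreover have "(Re (1 - w))\<^sup>2 + (Im (1 - w))\<^sup>2 > 0"
    using w1 by (metis complex_eq_iff sum_power2_gt_zero_iff right_minus_eq zero_complex.simps)
  ultimately show ?thesis by simp
qed

lemma norm_pwc: assumes "t \<in> {0..1}" "Re z \<ge> 0" shows "norm (pwc t z) \<le> 1"
proof (cases "t = 0")
  case True then show ?thesis by (simp add: pwc_def)
next
  case False
  then have t: "0 < t" "t \<le> 1" using assms by auto
  have "norm (pwc t z) = exp (Re z * ln t)" using False by (simp add: pwc_def)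
  also have "\<dots> \<le> exp 0" using t assms(2) by (intro exp_le_cancel_iff[THEN iffD2] mult_nonneg_nonpos) auto
  finally show ?thesis by simp
qed

lemma pwc_real: assumes "t \<in> {0..1}" shows "pwc t (of_real l) = of_real (t powr l)"
  using assms by (simp add: pwc_def powr_def exp_of_real[symmetric])

lemma cay_real: assumes "l > 0" shows "cay ((of_real l - 1) / (of_real l + 1)) = of_real l"
proof -
  have "of_real l + 1 \<noteq> (0::complex)" using assms
    by (metis add.commute add_cancel_right_right of_real_1 of_real_add of_real_eq_0_iff zero_less_one add_pos_pos less_irrefl)
  then have e1: "1 + (of_real l - 1) / (of_real l + 1) = 2 * of_real l / (of_real l + (1::complex))"
    and e2: "1 - (of_real l - 1) / (of_real l + 1) = 2 / (of_real l + (1::complex))"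
    by (simp_all add: field_simps)
  show ?thesis unfolding cay_def e1 e2 using \<open>of_real l + 1 \<noteq> 0\<close> by simp
qed

lemma Gm_hol: "Gm \<nu> holomorphic_on ball 0 1"
proof -
  have cay_hol: "cay holomorphic_on ball 0 1" unfolding cay_def
    by (intro holomorphic_intros) auto
  have "(\<lambda>w. pwc t (cay w)) holomorphic_on ball 0 1" for t
  proof (cases "t = 0")
    case True then show ?thesis by (simp add: pwc_def)
  next
    case False
    have "(\<lambda>w. exp (cay w * of_real (ln t))) holomorphic_on ball 0 1"
      by (intro holomorphic_intros cay_hol)
    then show ?thesis using False by (simp add: pwc_def)
  qed
  then show ?thesis unfolding Gm_def
  proof (induction \<nu>)
    case Nil then show ?case by simp
  next
    case (Cons p \<nu>)
    then show ?case by (simp only: list.map sum_list.Cons) (intro holomorphic_intros, auto)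
  qed
qed

lemma Gm_bound: assumes "adm \<nu>" "norm w < 1" shows "norm (Gm \<nu> w) \<le> 1"
proof -
  have re: "Re (cay w) \<ge> 0" using cay_re[OF assms(2)] by simp
  have "\<forall>p\<in>set \<nu>. snd p \<in> {0..1} \<Longrightarrow> norm (Gm \<nu> w) \<le> tot \<nu>"
  proof (induction \<nu>)
    case Nil then show ?case by (simp add: Gm_def tot_def)
  next
    case (Cons p \<nu>)
    have "norm (of_real (fst p) * pwc (snd p) (cay w)) \<le> \<bar>fst p\<bar> * 1"
      unfolding norm_mult norm_of_real using norm_pwc[OF _ re, of "snd p"] Cons.prems
      by (intro mult_left_mono) auto
    then show ?case using Cons
      by (simp add: Gm_def tot_def) (smt (verit) norm_triangle_ineq)
  qed
  then show ?thesis using assms(1) unfolding adm_def by auto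
qed

lemma Gm_real: assumes "adm \<nu>" "l > 0" shows "Gm \<nu> (of_real ((l - 1) / (l + 1))) = of_real (mom \<nu> l)"
proof -
  have "\<forall>p\<in>set \<nu>. snd p \<in> {0..1}" using assms(1) unfolding adm_def by auto
  then show ?thesis
  proof (induction \<nu>)
    case Nil then show ?case by (simp add: Gm_def mom_def)
  next
    case (Cons p \<nu>)
    then show ?case by (simp add: Gm_def mom_def cay_real[OF assms(2)] pwc_real)
  qed
qed

lemma moeb_real:
  assumes "l > 0" "m > 0"
  shows "norm (Moebius_function 0 (of_real ((l - 1) / (l + 1))) (of_real ((m - 1) / (m + 1))))
         = \<bar>m - l\<bar> / (m + l)"
proof -
  have p: "m + 1 > 0" "l + 1 > 0" "m + l > 0" using assms by auto
  have n1: "(m - 1) / (m + 1) - (l - 1) / (l + 1) = 2 * (m - l) / ((m + 1) * (l + 1))"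
    using p by (simp add: field_simps)
  have n2: "1 - (l - 1) / (l + 1) * ((m - 1) / (m + 1)) = 2 * (m + l) / ((m + 1) * (l + 1))"
    using p by (simp add: divide_simps) (simp add: algebra_simps)
  have n3: "((m - 1) / (m + 1) - (l - 1) / (l + 1)) / (1 - (l - 1) / (l + 1) * ((m - 1) / (m + 1)))
      = (m - l) / (m + l)"
    unfolding n1 n2 using p by (simp add: divide_simps) (simp add: algebra_simps)
  have "Moebius_function 0 (of_real ((l - 1) / (l + 1))) (of_real ((m - 1) / (m + 1)))
      = of_real (((m - 1) / (m + 1) - (l - 1) / (l + 1)) / (1 - (l - 1) / (l + 1) * ((m - 1) / (m + 1))))"
    unfolding Moebius_function_def complex_cnj_complex_of_real by simp
  also have "\<dots> = of_real ((m - l) / (m + l))" unfolding n3 ..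
  finally have eq: "Moebius_function 0 (of_real ((l - 1) / (l + 1))) (of_real ((m - 1) / (m + 1))) = of_real ((m - l) / (m + l))" .
  show ?thesis unfolding eq norm_of_real using p by (simp add: abs_div)
qed

lemma muntz_dist:
  fixes K :: "real set"
  assumes K: "finite K" "K \<subseteq> {0<..}" and mu: "\<mu> > 0" and eps: "\<epsilon> > 0"
  shows "\<exists>b. \<forall>t\<in>{0..1}. \<bar>t powr \<mu> - (\<Sum>l\<in>K. b l * t powr l)\<bar> < (\<Prod>l\<in>K. \<bar>\<mu> - l\<bar> / (\<mu> + l)) + \<epsilon>"
proof -
  define P where "P = (\<Prod>l\<in>K. \<bar>\<mu> - l\<bar> / (\<mu> + l))"
  have P0: "P \<ge> 0" unfolding P_def using K mu by (intro prod_nonneg) auto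
  show ?thesis
  proof (cases "\<mu> \<in> K")
    case True
    define b where "b l = (if l = \<mu> then 1 else 0 :: real)" for l :: real
    have "(\<Sum>l\<in>K. b l * t powr l) = t powr \<mu>" for t
    proof -
      have "(\<Sum>l\<in>K. b l * t powr l) = (\<Sum>l\<in>K. if l = \<mu> then t powr \<mu> else 0)"
        unfolding b_def by (intro sum.cong) auto
      also have "\<dots> = t powr \<mu>" using True by (simp add: sum.delta[OF K(1)])
      finally show ?thesis .
    qed
    then show ?thesis using P0 eps unfolding P_def[symmetric] by (intro exI[of _ b]) auto
  next
    case False
    define D where "D = P + \<epsilon>"
    have D: "D > 0" unfolding D_def using P0 eps by simp
    show ?thesis
    proof (rule ccontr)
      assume "\<not> ?thesis"
      then have hyp: "\<And>b. \<exists>t\<in>{0..1}. D \<le> \<bar>t powr \<mu> - (\<Sum>l\<in>K. b l * t powr l)\<bar>"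
        unfolding D_def P_def by (auto simp: not_less)
      have "\<forall>j. \<exists>\<nu>. adm \<nu> \<and> (\<forall>l\<in>K. \<bar>mom \<nu> l\<bar> < inverse (real (Suc j))) \<and> \<bar>mom \<nu> \<mu> - D\<bar> < inverse (real (Suc j))"
        using muntz_sep[OF K mu False D hyp] by simp
      then obtain \<nu> where adm: "\<And>j. adm (\<nu> j)"
        and nuK: "\<And>j l. l \<in> K \<Longrightarrow> \<bar>mom (\<nu> j) l\<bar> < inverse (real (Suc j))"
        and numu: "\<And>j. \<bar>mom (\<nu> j) \<mu> - D\<bar> < inverse (real (Suc j))"
        by metis
      define H where "H = {h. h holomorphic_on ball 0 1 \<and> (\<forall>z\<in>ball 0 1. norm (h z) \<le> 1)}"
      obtain g r where holg: "g holomorphic_on ball 0 1" and r: "strict_mono (r :: nat \<Rightarrow> nat)"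
        and lim: "\<And>x. x \<in> ball 0 1 \<Longrightarrow> ((\<lambda>n. Gm (\<nu> (r n)) x) \<longlongrightarrow> g x) sequentially"
      proof (rule Montel[of "ball 0 1" H "\<lambda>j. Gm (\<nu> j)"])
        show "\<And>h. h \<in> H \<Longrightarrow> h holomorphic_on ball 0 1" unfolding H_def by auto
        show "\<exists>B. \<forall>h\<in>H. \<forall>z\<in>K'. norm (h z) \<le> B" if "compact K'" "K' \<subseteq> ball 0 1" for K'
          using that unfolding H_def by (intro exI[of _ 1]) auto
        show "range (\<lambda>j. Gm (\<nu> j)) \<subseteq> H" unfolding H_def
          using Gm_hol Gm_bound adm by auto
      qed auto
      define A where "A = (\<lambda>l. of_real ((l - 1) / (l + 1)) :: complex) ` K"
      define am where "am = (of_real ((\<mu> - 1) / (\<mu> + 1)) :: complex)"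
      have inball: "norm (of_real ((l - 1) / (l + 1)) :: complex) < 1" if "l > 0" for l :: real
      proof -
        have r: "\<bar>(l - 1) / (l + 1)\<bar> < 1" using that by (auto simp: abs_less_iff field_simps)
        show ?thesis using r by (simp only: norm_of_real)
      qed
      have inr: "inverse (real (Suc (r n))) \<le> inverse (real (Suc n))" for n
        using seq_suble[OF r, of n] by (simp add: field_simps)
      have inv0: "(\<lambda>n. inverse (real (Suc (r n)))) \<longlonglongrightarrow> 0"
        using LIMSEQ_subseq_LIMSEQ[OF LIMSEQ_inverse_real_of_nat r] by (simp add: o_def)
      have gbd: "norm (g z) \<le> 1" if "z \<in> ball 0 1" for z
      proof (rule tendsto_upperbound[OF tendsto_norm[OF lim[OF that]]])
        show "\<forall>\<^sub>F n in sequentially. norm (Gm (\<nu> (r n)) z) \<le> 1"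
          using Gm_bound[OF adm] that by auto
      qed simp
      have gA: "g a = 0" if "a \<in> A" for a
      proof -
        obtain l where l: "l \<in> K" and a: "a = of_real ((l - 1) / (l + 1))" using \<open>a \<in> A\<close> A_def by auto
        have lpos: "l > 0" using l K by auto
        have ab: "a \<in> ball 0 1" using inball[OF lpos] a by simp
        have "((\<lambda>n. Gm (\<nu> (r n)) a) \<longlongrightarrow> 0) sequentially"
        proof (rule Lim_null_comparison[OF _ inv0])
          show "\<forall>\<^sub>F n in sequentially. norm (Gm (\<nu> (r n)) a) \<le> inverse (real (Suc (r n)))"
            using Gm_real[OF adm lpos] nuK[OF l] a by (auto simp: less_imp_le)
        qed
        then show ?thesis using LIMSEQ_unique lim[OF ab] by blast
      qed
      have gam: "g am = of_real D"
      proof -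
        have ab: "am \<in> ball 0 1" using inball[OF mu] am_def by simp
        have "((\<lambda>n. Gm (\<nu> (r n)) am - of_real D) \<longlongrightarrow> 0) sequentially"
        proof (rule Lim_null_comparison[OF _ inv0])
          show "\<forall>\<^sub>F n in sequentially. norm (Gm (\<nu> (r n)) am - of_real D) \<le> inverse (real (Suc (r n)))"
          proof (rule always_eventually, rule allI)
            fix n
            have "Gm (\<nu> (r n)) am - of_real D = of_real (mom (\<nu> (r n)) \<mu> - D)"
              using Gm_real[OF adm mu] am_def by simp
            then show "norm (Gm (\<nu> (r n)) am - of_real D) \<le> inverse (real (Suc (r n)))"
              using numu[of "r n"] by (simp only: norm_of_real less_imp_le)
          qed
        qed
        then have "((\<lambda>n. Gm (\<nu> (r n)) am) \<longlongrightarrow> of_real D) sequentially"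
          by (simp add: LIM_zero_iff)
        then show ?thesis using LIMSEQ_unique lim[OF ab] by blast
      qed
      have finA: "finite A" unfolding A_def using K by simp
      have Aball: "A \<subseteq> ball 0 1" unfolding A_def using inball K by auto
      have "norm (g am) \<le> (\<Prod>a\<in>A. norm (Moebius_function 0 a am))"
        by (rule schwarz_iter[OF finA holg gbd Aball gA]) (use inball[OF mu] am_def in auto)
      also have "\<dots> = (\<Prod>l\<in>K. norm (Moebius_function 0 (of_real ((l - 1) / (l + 1))) am))"
        unfolding A_def
      proof (rule prod.reindex_cong[where l="\<lambda>l. of_real ((l - 1) / (l + 1))"])
        show "inj_on (\<lambda>l. complex_of_real ((l - 1) / (l + 1))) K"
        proof (rule inj_onI)
          fix x y assume xy: "x \<in> K" "y \<in> K" "complex_of_real ((x - 1) / (x + 1)) = complex_of_real ((y - 1) / (y + 1))"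
          then have "(x - 1) / (x + 1) = (y - 1) / (y + 1)" by (simp only: of_real_eq_iff)
          moreover have "x + 1 > 0" "y + 1 > 0" using xy K by auto
          ultimately show "x = y" by (simp add: field_simps)
        qed
      qed auto
      also have "\<dots> = P" unfolding P_def am_def
        using K by (intro prod.cong refl moeb_real mu) auto
      finally have "D \<le> P" using gam D by simp
      then show False unfolding D_def using eps by simp
    qed
  qed
qed

lemma factor_bound:
  fixes \<mu> l :: real
  assumes "\<mu> > 0" "l > 0"
  shows "\<bar>\<mu> - l\<bar> / (\<mu> + l) \<le> exp (- min (1/\<mu>) \<mu> * (l / (l\<^sup>2 + 1)))"
proof -
  define \<kappa> where "\<kappa> = min (1/\<mu>) \<mu>"
  have k0: "\<kappa> > 0" unfolding \<kappa>_def using assms by simp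
  have main: "\<kappa> * (l / (l\<^sup>2 + 1)) \<le> 1 - \<bar>\<mu> - l\<bar> / (\<mu> + l)"
  proof (cases "l \<le> \<mu>")
    case True
    have "1 - \<bar>\<mu> - l\<bar> / (\<mu> + l) = 2 * l / (\<mu> + l)"
      using True assms by (simp add: field_simps)
    also have "\<dots> \<ge> l / \<mu>" using True assms by (simp add: field_simps)
    moreover have "l / \<mu> \<ge> (1/\<mu>) * (l / (l\<^sup>2 + 1))"
    proof -
      have "l / (l\<^sup>2 + 1) \<le> l" using assms by (simp add: power2_eq_square divide_le_eq)
      then have "(1/\<mu>) * (l / (l\<^sup>2 + 1)) \<le> (1/\<mu>) * l" using assms by (intro mult_left_mono) auto
      then show ?thesis by simp
    qed
    moreover have "(1/\<mu>) * (l / (l\<^sup>2 + 1)) \<ge> \<kappa> * (l / (l\<^sup>2 + 1))"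
      unfolding \<kappa>_def using assms by (intro mult_right_mono) auto
    ultimately show ?thesis by linarith
  next
    case False
    have "1 - \<bar>\<mu> - l\<bar> / (\<mu> + l) = 2 * \<mu> / (\<mu> + l)"
      using False assms by (simp add: field_simps)
    also have "\<dots> \<ge> \<mu> / l" using False assms by (simp add: field_simps)
    moreover have "\<mu> / l \<ge> \<mu> * (l / (l\<^sup>2 + 1))"
    proof -
      have "l / (l\<^sup>2 + 1) \<le> l / l\<^sup>2" using assms by (intro divide_left_mono mult_pos_pos add_pos_pos) auto
      also have "l / l\<^sup>2 = 1 / l" using assms by (simp add: power2_eq_square)
      finally have "l / (l\<^sup>2 + 1) \<le> 1 / l" .
      then show ?thesis using assms by (metis divide_inverse inverse_eq_divide mult_left_mono less_imp_le)
    qed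
    moreover have "\<mu> * (l / (l\<^sup>2 + 1)) \<ge> \<kappa> * (l / (l\<^sup>2 + 1))"
      unfolding \<kappa>_def using assms by (intro mult_right_mono) auto
    ultimately show ?thesis by linarith
  qed
  have "\<bar>\<mu> - l\<bar> / (\<mu> + l) \<le> 1 - \<kappa> * (l / (l\<^sup>2 + 1))" using main by linarith
  also have "\<dots> \<le> exp (- (\<kappa> * (l / (l\<^sup>2 + 1))))" using exp_ge_add_one_self[of "- (\<kappa> * (l / (l\<^sup>2 + 1)))"] by simp
  finally show ?thesis unfolding \<kappa>_def by simp
qed

lemma prod_small:
  fixes lam :: "nat \<Rightarrow> real"
  assumes pos: "\<And>i. i \<ge> 1 \<Longrightarrow> lam i > 0"
    and div: "\<not> summable (\<lambda>i. lam (Suc i) / ((lam (Suc i))\<^sup>2 + 1))"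
    and mu: "\<mu> > 0" and e: "e > 0"
  shows "eventually (\<lambda>n. (\<Prod>i\<in>{1..n}. \<bar>\<mu> - lam i\<bar> / (\<mu> + lam i)) < e) sequentially"
proof -
  define \<kappa> where "\<kappa> = min (1/\<mu>) \<mu>"
  have k0: "\<kappa> > 0" unfolding \<kappa>_def using mu by simp
  define w where "w i = lam (Suc i) / ((lam (Suc i))\<^sup>2 + 1)" for i
  have w0: "w i \<ge> 0" for i unfolding w_def using pos[of "Suc i"] by simp
  obtain N where N: "sum w {..<N} > - ln e / \<kappa>"
  proof (rule ccontr)
    assume "\<not> thesis"
    then have "\<forall>N. sum w {..<N} \<le> - ln e / \<kappa>" using that by (meson not_le)
    then have "summable w" using w0 by (intro summableI_nonneg_bounded) auto
    then show False using div unfolding w_def by simp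
  qed
  show ?thesis
  proof (rule eventually_sequentiallyI[of N])
    fix n assume n: "N \<le> n"
    have "(\<Prod>i\<in>{1..n}. \<bar>\<mu> - lam i\<bar> / (\<mu> + lam i)) \<le> (\<Prod>i\<in>{1..n}. exp (- \<kappa> * (lam i / ((lam i)\<^sup>2 + 1))))"
      unfolding \<kappa>_def using pos mu by (intro prod_mono conjI factor_bound) (auto intro!: divide_nonneg_pos add_pos_pos)
    also have "\<dots> = exp (- \<kappa> * (\<Sum>i\<in>{1..n}. lam i / ((lam i)\<^sup>2 + 1)))"
      by (simp add: exp_sum sum_distrib_left)
    also have "(\<Sum>i\<in>{1..n}. lam i / ((lam i)\<^sup>2 + 1)) = sum w {..<n}"
      unfolding w_def by (simp add: sum.atLeast1_atMost_eq)
    also have "sum w {..<N} \<le> sum w {..<n}" using n w0 by (intro sum_mono2) auto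
    then have "exp (- \<kappa> * sum w {..<n}) \<le> exp (- \<kappa> * sum w {..<N})" using k0 by simp
    also have "\<dots> < exp (ln e)"
    proof -
      have "\<kappa> * sum w {..<N} > - ln e" using N k0 by (simp add: field_simps)
      then show ?thesis by simp
    qed
    also have "\<dots> = e" using e by simp
    finally show "(\<Prod>i\<in>{1..n}. \<bar>\<mu> - lam i\<bar> / (\<mu> + lam i)) < e" .
  qed
qed

lemma muntz_dense:
  fixes lam :: "nat \<Rightarrow> real" and f :: "real \<Rightarrow> real"
  assumes pos: "\<And>i. i \<ge> 1 \<Longrightarrow> lam i > 0" and inj: "inj_on lam {1..}"
    and div: "\<not> summable (\<lambda>i. lam (Suc i) / ((lam (Suc i))\<^sup>2 + 1))"
    and f: "continuous_on {0..1} f" and e: "\<epsilon> > 0"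
  shows "\<exists>n\<ge>1. \<exists>c::nat\<Rightarrow>real. \<forall>x\<in>{0..1}. \<bar>f x - (c 0 + (\<Sum>i=1..n. c i * x powr lam i))\<bar> < \<epsilon>"
proof -
  obtain g where pg: "polynomial_function g" and fg: "\<forall>x\<in>{0..1::real}. norm (f x - g x) < \<epsilon> / 2"
    using Stone_Weierstrass_polynomial_function[OF compact_Icc f, of "\<epsilon>/2"] e by auto
  obtain a M where gdef: "g = (\<lambda>x. \<Sum>k\<le>M. a k * x ^ k)"
    using pg real_polynomial_function_imp_sum real_polynomial_function_eq by metis
  define A where "A = (\<Sum>k\<le>M. \<bar>a k\<bar>) + 1"
  have A1: "A \<ge> 1" unfolding A_def by (simp add: sum_nonneg)
  define \<delta> where "\<delta> = \<epsilon> / (2 * A)"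
  have \<delta>0: "\<delta> > 0" unfolding \<delta>_def using e A1 by simp
  have ev: "eventually (\<lambda>n. \<forall>k\<in>{1..M}. (\<Prod>i\<in>{1..n}. \<bar>real k - lam i\<bar> / (real k + lam i)) < \<delta> / 2) sequentially"
    using prod_small[OF pos div _ , of _ "\<delta>/2"] \<delta>0 by (intro eventually_ball_finite) auto
  obtain n where n1: "n \<ge> 1" and nP: "\<forall>k\<in>{1..M}. (\<Prod>i\<in>{1..n}. \<bar>real k - lam i\<bar> / (real k + lam i)) < \<delta> / 2"
    using eventually_conj[OF ev eventually_ge_at_top[of 1]] by (auto dest: eventually_happens)
  define K where "K = lam ` {1..n}"
  have injn: "inj_on lam {1..n}" using inj by (rule inj_on_subset) auto
  have finK: "finite K" unfolding K_def by simp
  have Kpos: "K \<subseteq> {0<..}" unfolding K_def using pos by auto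
  have "\<forall>k\<in>{1..M}. \<exists>b. \<forall>t\<in>{0..1}. \<bar>t powr real k - (\<Sum>l\<in>K. b l * t powr l)\<bar> < \<delta>"
  proof
    fix k assume k: "k \<in> {1..M}"
    obtain b where b: "\<forall>t\<in>{0..1}. \<bar>t powr real k - (\<Sum>l\<in>K. b l * t powr l)\<bar> < (\<Prod>l\<in>K. \<bar>real k - l\<bar> / (real k + l)) + \<delta> / 2"
      using muntz_dist[OF finK Kpos, of "real k" "\<delta>/2"] k \<delta>0 by auto
    have "(\<Prod>l\<in>K. \<bar>real k - l\<bar> / (real k + l)) = (\<Prod>i\<in>{1..n}. \<bar>real k - lam i\<bar> / (real k + lam i))"
      unfolding K_def by (rule prod.reindex[OF injn, unfolded o_def])
    then show "\<exists>b. \<forall>t\<in>{0..1}. \<bar>t powr real k - (\<Sum>l\<in>K. b l * t powr l)\<bar> < \<delta>"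
      using b nP k by (intro exI[of _ b]) force
  qed
  then obtain B where B: "\<And>k t. k \<in> {1..M} \<Longrightarrow> t \<in> {0..1} \<Longrightarrow> \<bar>t powr real k - (\<Sum>l\<in>K. B k l * t powr l)\<bar> < \<delta>"
    by metis
  define c where "c i = (if i = 0 then a 0 else (\<Sum>k\<in>{1..M}. a k * B k (lam i)))" for i
  show ?thesis
  proof (intro exI[of _ n] conjI n1 exI[of _ c] ballI)
    fix x :: real assume x: "x \<in> {0..1}"
    have pw: "x ^ k = x powr real k" if "k \<ge> 1" for k
    proof (cases "x = 0")
      case True then show ?thesis using that by simp
    next
      case False then show ?thesis using x by (simp add: powr_realpow)
    qed
    have atM: "{..M} = insert 0 {1..M}" by auto
    have gx: "g x = a 0 + (\<Sum>k\<in>{1..M}. a k * x powr real k)"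
      unfolding gdef atM by (simp add: pw)
    have sK: "(\<Sum>l\<in>K. B k l * x powr l) = (\<Sum>i=1..n. B k (lam i) * x powr lam i)" for k
      unfolding K_def by (rule sum.reindex[OF injn, unfolded o_def])
    have cs: "(\<Sum>i=1..n. c i * x powr lam i) = (\<Sum>k\<in>{1..M}. a k * (\<Sum>l\<in>K. B k l * x powr l))"
    proof -
      have "(\<Sum>i=1..n. c i * x powr lam i) = (\<Sum>i=1..n. \<Sum>k\<in>{1..M}. a k * (B k (lam i) * x powr lam i))"
        unfolding c_def by (intro sum.cong) (auto simp: sum_distrib_right mult.assoc)
      also have "\<dots> = (\<Sum>k\<in>{1..M}. \<Sum>i=1..n. a k * (B k (lam i) * x powr lam i))" by (rule sum.swap)
      also have "\<dots> = (\<Sum>k\<in>{1..M}. a k * (\<Sum>l\<in>K. B k l * x powr l))"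
        unfolding sK by (simp add: sum_distrib_left)
      finally show ?thesis .
    qed
    have "g x - (c 0 + (\<Sum>i=1..n. c i * x powr lam i)) = (\<Sum>k\<in>{1..M}. a k * (x powr real k - (\<Sum>l\<in>K. B k l * x powr l)))"
      unfolding gx cs by (simp add: c_def sum_subtractf right_diff_distrib)
    then have "\<bar>g x - (c 0 + (\<Sum>i=1..n. c i * x powr lam i))\<bar> = \<bar>\<Sum>k\<in>{1..M}. a k * (x powr real k - (\<Sum>l\<in>K. B k l * x powr l))\<bar>"
      by simp
    also have "\<dots> \<le> (\<Sum>k\<in>{1..M}. \<bar>a k * (x powr real k - (\<Sum>l\<in>K. B k l * x powr l))\<bar>)"
      by (rule sum_abs)
    also have "\<dots> \<le> (\<Sum>k\<in>{1..M}. \<bar>a k\<bar> * \<delta>)"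
      unfolding abs_mult by (intro sum_mono mult_left_mono) (auto intro!: less_imp_le[OF B[OF _ x]])
    also have "\<dots> \<le> (A - 1) * \<delta>"
    proof -
      have "(\<Sum>k\<in>{1..M}. \<bar>a k\<bar>) \<le> (\<Sum>k\<le>M. \<bar>a k\<bar>)" by (intro sum_mono2) auto
      then show ?thesis unfolding A_def using \<delta>0 by (simp add: sum_distrib_right[symmetric])
    qed
    also have "\<dots> < \<epsilon> / 2" unfolding \<delta>_def using A1 e by (simp add: field_simps)
    finally have "\<bar>g x - (c 0 + (\<Sum>i=1..n. c i * x powr lam i))\<bar> < \<epsilon> / 2" .
    moreover have "\<bar>f x - g x\<bar> < \<epsilon> / 2" using fg x by simp
    ultimately show "\<bar>f x - (c 0 + (\<Sum>i=1..n. c i * x powr lam i))\<bar> < \<epsilon>" by linarith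
  qed
qed

lemma q_int_0 [simp]: "q_int q 0 = 0" by (simp add: q_int_def)

lemma q_int_Suc: "q_int q (Suc k) = 1 + q * q_int q k"
proof (cases "q = 1")
  case True then show ?thesis by (simp add: q_int_def)
next
  case False then show ?thesis by (simp add: q_int_def field_simps)
qed

lemma q_int_add: "q_int q (a + b) = q_int q a + q ^ a * q_int q b"
  by (induction a) (simp_all add: q_int_Suc algebra_simps)

lemma q_int_sum: "q_int q k = (\<Sum>j<k. q ^ j)"
proof (induction k)
  case (Suc k)
  have "q_int q (Suc k) = q_int q (k + 1)" by simp
  also have "\<dots> = q_int q k + q ^ k * q_int q 1" by (rule q_int_add)
  finally show ?case using Suc by (simp add: q_int_Suc)
qed simp

lemma q_int_nonneg: "0 \<le> q \<Longrightarrow> 0 \<le> q_int q k"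
  unfolding q_int_sum by (intro sum_nonneg) auto

lemma q_int_ge1: assumes "0 \<le> q" "k \<ge> 1" shows "q_int q k \<ge> 1"
proof -
  obtain j where k: "k = Suc j" using assms(2) by (cases k) auto
  show ?thesis unfolding k q_int_Suc using q_int_nonneg[OF assms(1), of j] assms(1) by simp
qed

lemma q_int_mono: assumes "0 \<le> q" "a \<le> b" shows "q_int q a \<le> q_int q b"
proof -
  obtain c where "b = a + c" using assms(2) le_Suc_ex by blast
  then show ?thesis using q_int_add[of q a c] q_int_nonneg[OF assms(1), of c] assms(1) by simp
qed

lemma q_fact_Suc: "q_fact q (Suc n) = q_fact q n * q_int q (Suc n)"
  by (simp add: q_fact_def)

lemma q_fact_pos: "0 \<le> q \<Longrightarrow> q_fact q n > 0"
  unfolding q_fact_def using q_int_ge1 by (intro prod_pos) (auto intro: less_le_trans[OF zero_less_one])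

definition Cq :: "real \<Rightarrow> nat \<Rightarrow> nat \<Rightarrow> real" where
  "Cq q n k = q_fact q (n + k) / (q_fact q k * q_fact q n)"

lemma q_binom_Cq: "q_binom q (n + k) k = Cq q n k"
  by (simp add: q_binom_def Cq_def mult.commute)

lemma q_fact_0 [simp]: "q_fact q 0 = 1" by (simp add: q_fact_def)

lemma Cq_0 [simp]: "0 \<le> q \<Longrightarrow> Cq q n 0 = 1"
  using q_fact_pos[of q n] by (simp add: Cq_def)

lemma Cq_n0 [simp]: "0 \<le> q \<Longrightarrow> Cq q 0 k = 1"
  using q_fact_pos[of q k] by (simp add: Cq_def)

lemma Cq_pos: "0 \<le> q \<Longrightarrow> Cq q n k > 0"
  using q_fact_pos[of q] by (simp add: Cq_def)

lemma Cq_rec: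
  assumes q: "0 \<le> q"
  shows "Cq q (Suc n) (Suc k) = Cq q n (Suc k) + q ^ Suc n * Cq q (Suc n) k"
proof -
  define F where "F = q_fact q"
  have Fp: "F m > 0" for m unfolding F_def using q_fact_pos[OF q] by simp
  have ik: "q_int q (Suc k) > 0" and inn: "q_int q (Suc n) > 0"
    using q_int_ge1[OF q] by (auto intro: less_le_trans[OF zero_less_one])
  have add: "q_int q (Suc n + Suc k) = q_int q (Suc n) + q ^ Suc n * q_int q (Suc k)"
    by (rule q_int_add)
  have e1: "F (Suc n + Suc k) = F (n + Suc k) * q_int q (Suc n + Suc k)"
    unfolding F_def by (simp add: q_fact_Suc)
  have e2: "F (Suc n + k) = F (n + Suc k)" by simp
  have e3: "F (Suc k) = F k * q_int q (Suc k)" "F (Suc n) = F n * q_int q (Suc n)"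
    unfolding F_def by (simp_all add: q_fact_Suc)
  show ?thesis
    unfolding Cq_def F_def[symmetric] e1 e2 e3 add
    using Fp[of k] Fp[of n] ik inn by (simp add: field_simps)
qed

lemma Cq_shift1:
  assumes q: "0 \<le> q"
  shows "Cq q n (Suc k) * (q_int q (Suc k) / q_int q (Suc k + n)) = Cq q n k"
proof -
  define F where "F = q_fact q"
  have Fp: "F m > 0" for m unfolding F_def using q_fact_pos[OF q] by simp
  have ik: "q_int q (Suc k) > 0" and ikn: "q_int q (Suc k + n) > 0"
    using q_int_ge1[OF q] by (auto intro: less_le_trans[OF zero_less_one])
  have e1: "F (n + Suc k) = F (n + k) * q_int q (Suc k + n)"
    unfolding F_def by (simp add: q_fact_Suc add.commute)
  have e3: "F (Suc k) = F k * q_int q (Suc k)"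
    unfolding F_def by (simp_all add: q_fact_Suc)
  show ?thesis
    unfolding Cq_def F_def[symmetric] e1 e3
    using Fp[of k] Fp[of n] ik ikn by (simp add: field_simps)
qed

definition Pn :: "real \<Rightarrow> nat \<Rightarrow> real \<Rightarrow> real" where
  "Pn q n x = (\<Prod>j=0..n. (1 - q ^ j * x))"

lemma qjx_lt1: fixes q x :: real assumes "0 \<le> q" "q \<le> 1" "0 \<le> x" "x < 1" shows "q ^ j * x < 1"
proof -
  have "q ^ j \<le> 1" using assms by (intro power_le_one) auto
  then have "q ^ j * x \<le> x" using assms by (simp add: mult_left_le_one_le)
  then show ?thesis using assms by simp
qed

lemma Pn_pos: assumes "0 \<le> q" "q \<le> 1" "0 \<le> x" "x < 1" shows "Pn q n x > 0"
  unfolding Pn_def using qjx_lt1[OF assms] by (intro prod_pos) auto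

lemma Pn_Suc: "Pn q (Suc n) x = Pn q n x * (1 - q ^ Suc n * x)"
  by (simp add: Pn_def)

lemma Cq_sums:
  assumes q: "0 \<le> q" "q \<le> 1" and x: "0 \<le> x" "x < 1"
  shows "(\<lambda>k. Cq q n k * x ^ k) sums (1 / Pn q n x)"
proof (induction n)
  case 0
  have "(\<lambda>k. x ^ k) sums (1 / (1 - x))" using x by (intro geometric_sums) auto
  then show ?case using q by (simp add: Pn_def)
next
  case (Suc n)
  define G where "G = 1 / Pn q n x"
  define c where "c = q ^ Suc n * x"
  have c: "0 \<le> c" "c < 1" unfolding c_def using qjx_lt1[OF q x, of "Suc n"] q x by auto
  define f where "f k = Cq q (Suc n) k * x ^ k" for k
  define g where "g k = Cq q n k * x ^ k" for k
  have g: "g sums G" using Suc unfolding g_def G_def .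
  have f0: "f k \<ge> 0" "g k \<ge> 0" for k unfolding f_def g_def using Cq_pos[OF q(1)] x
    by (simp_all add: less_imp_le)
  have fS: "f (Suc k) = g (Suc k) + c * f k" for k
    unfolding f_def g_def c_def Cq_rec[OF q(1)] by (simp add: algebra_simps)
  have gS: "(\<lambda>k. g (Suc k)) sums (G - 1)"
    using g sums_Suc_iff[of g "G - 1"] q(1) by (simp add: g_def)
  have "summable f"
  proof (rule summableI_nonneg_bounded[of f "G / (1 - c)"])
    show "0 \<le> f k" for k by (rule f0)
    show "sum f {..<N} \<le> G / (1 - c)" for N
    proof -
      have gle: "(\<Sum>k<N. g (Suc k)) \<le> G - 1"
        using sum_le_suminf[OF sums_summable[OF gS], of "{..<N}"] f0 sums_unique[OF gS] by auto
      have "sum f {..<Suc N} = f 0 + (\<Sum>k<N. f (Suc k))" by (rule sum.lessThan_Suc_shift)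
      also have "\<dots> = 1 + (\<Sum>k<N. g (Suc k)) + c * sum f {..<N}"
      proof -
        have "f 0 = 1" using q by (simp add: f_def)
        then show ?thesis unfolding fS by (simp add: sum.distrib sum_distrib_left)
      qed
      finally have eq: "sum f {..<Suc N} = 1 + (\<Sum>k<N. g (Suc k)) + c * sum f {..<N}" .
      have mono: "sum f {..<N} \<le> sum f {..<Suc N}" using f0 by simp
      have "sum f {..<Suc N} \<le> G + c * sum f {..<Suc N}"
        using eq gle mono c by (smt (verit) mult_left_mono)
      then have "(1 - c) * sum f {..<Suc N} \<le> G" by (simp add: algebra_simps)
      then have "sum f {..<Suc N} \<le> G / (1 - c)" using c by (simp add: field_simps)
      then show ?thesis using mono by linarith
    qed
  qed
  define V where "V = suminf f"
  have fV: "f sums V" using \<open>summable f\<close> V_def by (simp add: summable_sums)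
  have "(\<lambda>k. f (Suc k)) sums (V - f 0)" using fV sums_Suc_iff[of f "V - f 0"] by simp
  moreover have "(\<lambda>k. f (Suc k)) sums ((G - 1) + c * V)"
    unfolding fS by (intro sums_add gS sums_mult fV)
  ultimately have "V - f 0 = (G - 1) + c * V" by (rule sums_unique2)
  then have "V = G / (1 - c)" using c q by (simp add: f_def field_simps)
  also have "\<dots> = 1 / Pn q (Suc n) x"
    unfolding G_def c_def Pn_Suc using c Pn_pos[OF q x, of n] by (simp add: c_def field_simps)
  finally show ?case using fV unfolding f_def by simp
qed

definition tq :: "real \<Rightarrow> nat \<Rightarrow> nat \<Rightarrow> real" where
  "tq q n k = q_int q k / q_int q (k + n)"

lemma tq_0 [simp]: "tq q n 0 = 0" by (simp add: tq_def)

lemma tq_range: assumes "0 \<le> q" "n \<ge> 1" shows "0 \<le> tq q n k" "tq q n k \<le> 1"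
proof -
  have p: "q_int q (k + n) \<ge> 1" using q_int_ge1[OF assms(1)] assms(2) by simp
  have "q_int q k \<le> q_int q (k + n)" by (rule q_int_mono[OF assms(1)]) simp
  then show "0 \<le> tq q n k" "tq q n k \<le> 1" unfolding tq_def using p q_int_nonneg[OF assms(1), of k]
    by (auto simp: divide_le_eq_1)
qed

lemma tq_sq_bound:
  assumes q: "0 \<le> q" "q \<le> 1" and n: "n \<ge> 1"
  shows "(tq q n k)\<^sup>2 \<le> tq q n k * tq q n (k - 1) + 1 / q_int q n"
proof (cases k)
  case 0
  have "q_int q n \<ge> 1" using q_int_ge1[OF q(1) n] .
  then show ?thesis using 0 by simp
next
  case (Suc j)
  define A where "A = q_int q (Suc j)"
  define B where "B = q_int q (Suc j + n)"
  define a where "a = q_int q j"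
  define b where "b = q_int q (j + n)"
  define N where "N = q_int q n"
  have N1: "N \<ge> 1" unfolding N_def by (rule q_int_ge1[OF q(1) n])
  have b1: "b \<ge> N" unfolding b_def N_def by (rule q_int_mono[OF q(1)]) simp
  have B1: "B \<ge> b" unfolding B_def b_def by (rule q_int_mono[OF q(1)]) simp
  have a0: "a \<ge> 0" unfolding a_def by (rule q_int_nonneg[OF q(1)])
  have qj: "0 \<le> q ^ j" "q ^ j \<le> 1" using q by (auto intro: power_le_one)
  have eA: "A = a + q ^ j" unfolding A_def a_def using q_int_add[of q j 1] by (simp add: q_int_Suc)
  have eB: "B = b + q ^ (j + n)" unfolding B_def b_def using q_int_add[of q "j + n" 1] by (simp add: q_int_Suc)
  have eb: "b = N + q ^ n * a" unfolding b_def N_def a_def using q_int_add[of q n j] by (simp add: add.commute)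
  have cross: "A * b - a * B = q ^ j * N"
    unfolding eA eB eb by (simp add: algebra_simps power_add)
  have bpos: "b > 0" "B > 0" using b1 B1 N1 by auto
  have t1: "tq q n (Suc j) = A / B" "tq q n (k - 1) = a / b" unfolding tq_def A_def B_def a_def b_def Suc by simp_all
  have diff: "A / B - a / b = q ^ j * N / (B * b)"
    using bpos cross by (simp add: field_simps)
  have d0: "A / B - a / b \<ge> 0" unfolding diff using qj N1 bpos by simp
  have d1: "A / B - a / b \<le> 1 / N"
  proof -
    have "q ^ j * N * N \<le> 1 * (B * b)"
    proof -
      have "N * N \<le> B * b" using b1 B1 N1 by (intro mult_mono) auto
      moreover have "q ^ j * (N * N) \<le> 1 * (N * N)" using qj N1 by (intro mult_right_mono) auto
      ultimately show ?thesis by (simp add: mult.assoc)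
    qed
    then show ?thesis unfolding diff using bpos N1 by (simp add: field_simps)
  qed
  have tr: "0 \<le> A / B" "A / B \<le> 1" using tq_range[OF q(1) n, of "Suc j"] t1 by auto
  have "(A / B)\<^sup>2 = A / B * (a / b) + A / B * (A / B - a / b)" by (simp add: power2_eq_square algebra_simps)
  also have "A / B * (A / B - a / b) \<le> A / B - a / b" using tr d0 by (intro mult_left_le_one_le) auto
  then have "A / B * (a / b) + A / B * (A / B - a / b) \<le> A / B * (a / b) + 1 / N" using d1 by linarith
  finally show ?thesis unfolding N_def using t1 Suc by simp
qed

lemma mom1_sums:
  assumes q: "0 \<le> q" "q \<le> 1" and x: "0 \<le> x" "x < 1"
  shows "(\<lambda>k. Cq q n k * x ^ k * tq q n k) sums (x * (1 / Pn q n x))"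
proof -
  have "(\<lambda>k. Cq q n (Suc k) * x ^ Suc k * tq q n (Suc k)) = (\<lambda>k. x * (Cq q n k * x ^ k))"
  proof
    fix k
    have e: "Cq q n (Suc k) * (q_int q (Suc k) / q_int q (Suc k + n)) = Cq q n k" by (rule Cq_shift1[OF q(1)])
    have "Cq q n (Suc k) * x ^ Suc k * tq q n (Suc k) = x ^ Suc k * (Cq q n (Suc k) * (q_int q (Suc k) / q_int q (Suc k + n)))"
      unfolding tq_def by (simp only: ac_simps)
    also have "\<dots> = x * (Cq q n k * x ^ k)" unfolding e by simp
    finally show "Cq q n (Suc k) * x ^ Suc k * tq q n (Suc k) = x * (Cq q n k * x ^ k)" .
  qed
  then have "(\<lambda>k. Cq q n (Suc k) * x ^ Suc k * tq q n (Suc k)) sums (x * (1 / Pn q n x))"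
    using sums_mult[OF Cq_sums[OF q x, of n], of x] by simp
  then show ?thesis using sums_Suc_iff[of "\<lambda>k. Cq q n k * x ^ k * tq q n k"] by simp
qed

lemma mom2_sums:
  assumes q: "0 \<le> q" "q \<le> 1" and x: "0 \<le> x" "x < 1"
  shows "(\<lambda>k. Cq q n k * x ^ k * (tq q n k * tq q n (k - 1))) sums (x\<^sup>2 * (1 / Pn q n x))"
proof -
  define T where "T k = Cq q n k * x ^ k * (tq q n k * tq q n (k - 1))" for k
  have "(\<lambda>k. T (Suc (Suc k))) = (\<lambda>k. x\<^sup>2 * (Cq q n k * x ^ k))"
  proof
    fix k
    have "Cq q n (Suc (Suc k)) * tq q n (Suc (Suc k)) = Cq q n (Suc k)"
      using Cq_shift1[OF q(1), of n "Suc k"] by (simp add: tq_def)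
    moreover have "Cq q n (Suc k) * tq q n (Suc k) = Cq q n k"
      using Cq_shift1[OF q(1), of n k] by (simp add: tq_def)
    ultimately show "T (Suc (Suc k)) = x\<^sup>2 * (Cq q n k * x ^ k)"
      unfolding T_def by (simp add: power2_eq_square algebra_simps)
  qed
  then have "(\<lambda>k. T (Suc (Suc k))) sums (x\<^sup>2 * (1 / Pn q n x))"
    using sums_mult[OF Cq_sums[OF q x, of n], of "x\<^sup>2"] by simp
  then have "(\<lambda>k. T (Suc k)) sums (x\<^sup>2 * (1 / Pn q n x))"
    using sums_Suc_iff[of "\<lambda>k. T (Suc k)"] by (simp add: T_def)
  then have "T sums (x\<^sup>2 * (1 / Pn q n x))"
    using sums_Suc_iff[of T] by (simp add: T_def)
  then show ?thesis unfolding T_def .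
qed

lemma MKZ_eq:
  assumes "x \<noteq> 1"
  shows "MKZ n q h x = Pn q n x * (\<Sum>k. Cq q n k * x ^ k * h (tq q n k))"
  using assms by (simp add: MKZ_def Pn_def q_binom_Cq tq_def)

lemma mkz_bound:
  assumes q: "0 \<le> q" "q \<le> 1" and n: "n \<ge> 1" and x: "0 \<le> x" "x < 1"
    and hb: "\<And>s. s \<in> {0..1} \<Longrightarrow> \<bar>h s\<bar> \<le> Bd"
    and hmod: "\<And>s. s \<in> {0..1} \<Longrightarrow> \<bar>h s - h x\<bar> \<le> e + c * (s - x)\<^sup>2"
    and c: "c \<ge> 0"
  shows "\<bar>MKZ n q h x - h x\<bar> \<le> e + c / q_int q n"
proof -
  define w where "w k = Cq q n k * x ^ k" for k
  define t where "t k = tq q n k" for k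
  define P where "P = Pn q n x"
  define G where "G = 1 / P"
  have P0: "P > 0" unfolding P_def by (rule Pn_pos[OF q x])
  have PG: "P * G = 1" unfolding G_def using P0 by simp
  have w0: "w k \<ge> 0" for k unfolding w_def using Cq_pos[OF q(1)] x by (simp add: less_imp_le)
  have wG: "w sums G" unfolding w_def G_def P_def by (rule Cq_sums[OF q x])
  have sw: "summable w" using wG by (rule sums_summable)
  have tr: "0 \<le> t k" "t k \<le> 1" for k unfolding t_def using tq_range[OF q(1) n] by auto
  have m1: "(\<lambda>k. w k * t k) sums (x * G)" unfolding w_def t_def G_def P_def by (rule mom1_sums[OF q x])
  have m2: "(\<lambda>k. w k * (t k * t (k - 1))) sums (x\<^sup>2 * G)" unfolding w_def t_def G_def P_def by (rule mom2_sums[OF q x])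
  define N where "N = q_int q n"
  have N1: "N \<ge> 1" unfolding N_def by (rule q_int_ge1[OF q(1) n])
  have s2: "summable (\<lambda>k. w k * (t k)\<^sup>2)"
  proof (rule summable_comparison_test'[OF sw])
    fix k :: nat
    have "(t k)\<^sup>2 \<le> 1" using tr[of k] by (simp add: power_le_one)
    then show "norm (w k * (t k)\<^sup>2) \<le> w k" using w0[of k] by (simp add: abs_mult mult_left_le)
  qed
  have S2: "(\<Sum>k. w k * (t k)\<^sup>2) \<le> x\<^sup>2 * G + G / N"
  proof -
    have "(\<Sum>k. w k * (t k)\<^sup>2) \<le> (\<Sum>k. w k * (t k * t (k - 1)) + w k * (1 / N))"
    proof (rule suminf_le[OF _ s2])
      show "w k * (t k)\<^sup>2 \<le> w k * (t k * t (k - 1)) + w k * (1 / N)" for k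
      proof -
        have "w k * (t k)\<^sup>2 \<le> w k * (t k * t (k - 1) + 1 / N)"
          using tq_sq_bound[OF q n, of k] w0[of k] unfolding t_def N_def by (rule mult_left_mono)
        then show ?thesis by (simp add: distrib_left)
      qed
      show "summable (\<lambda>k. w k * (t k * t (k - 1)) + w k * (1 / N))"
        using m2 sw by (intro summable_add summable_mult2) (auto simp: sums_summable)
    qed
    also have "\<dots> = x\<^sup>2 * G + G / N"
      using sums_unique[OF sums_add[OF m2 sums_mult2[OF wG, of "1/N"]]] by simp
    finally show ?thesis .
  qed
  define F where "F k = w k * h (t k)" for k
  have sF: "summable F"
  proof (rule summable_comparison_test'[OF summable_mult2[OF sw, of Bd]])
    fix k :: nat
    have "\<bar>h (t k)\<bar> \<le> Bd" using hb tr[of k] by auto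
    then show "norm (F k) \<le> w k * Bd" unfolding F_def using w0[of k] by (simp add: abs_mult mult_left_mono)
  qed
  define D where "D k = F k - w k * h x" for k
  have sD: "D sums (suminf F - G * h x)" unfolding D_def
    using sums_diff[OF summable_sums[OF sF] sums_mult2[OF wG, of "h x"]] by simp
  have Dabs: "\<bar>D k\<bar> \<le> w k * e + c * (w k * (t k)\<^sup>2 - 2 * x * (w k * t k) + x\<^sup>2 * w k)" for k
  proof -
    have "\<bar>D k\<bar> = w k * \<bar>h (t k) - h x\<bar>" unfolding D_def F_def using w0[of k]
      by (simp add: abs_mult right_diff_distrib[symmetric])
    also have "\<dots> \<le> w k * (e + c * (t k - x)\<^sup>2)" using hmod[of "t k"] tr[of k] w0[of k]
      by (intro mult_left_mono) auto
    also have "\<dots> = w k * e + c * (w k * (t k)\<^sup>2 - 2 * x * (w k * t k) + x\<^sup>2 * w k)"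
      by (simp add: power2_eq_square algebra_simps)
    finally show ?thesis .
  qed
  have sE: "(\<lambda>k. w k * e + c * (w k * (t k)\<^sup>2 - 2 * x * (w k * t k) + x\<^sup>2 * w k))
      sums (G * e + c * ((\<Sum>k. w k * (t k)\<^sup>2) - 2 * x * (x * G) + x\<^sup>2 * G))"
    by (intro sums_add sums_mult sums_mult2 sums_diff wG m1 summable_sums[OF s2])
  have sDa: "summable (\<lambda>k. \<bar>D k\<bar>)"
  proof (rule summable_comparison_test'[OF sums_summable[OF sE]])
    show "norm \<bar>D k\<bar> \<le> w k * e + c * (w k * (t k)\<^sup>2 - 2 * x * (w k * t k) + x\<^sup>2 * w k)" for k
      using Dabs[of k] by simp
  qed
  have "\<bar>suminf D\<bar> \<le> (\<Sum>k. \<bar>D k\<bar>)" by (rule summable_rabs[OF sDa])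
  also have "\<dots> \<le> G * e + c * ((\<Sum>k. w k * (t k)\<^sup>2) - 2 * x * (x * G) + x\<^sup>2 * G)"
    using suminf_le[OF Dabs sDa sums_summable[OF sE]] sums_unique[OF sE] by simp
  also have "\<dots> \<le> G * e + c * ((x\<^sup>2 * G + G / N) - 2 * x * (x * G) + x\<^sup>2 * G)"
    using S2 c by (intro add_left_mono mult_left_mono) (auto simp: mult.commute)
  also have "\<dots> = G * (e + c / N)" by (simp add: power2_eq_square algebra_simps)
  finally have Dle: "\<bar>suminf D\<bar> \<le> G * (e + c / N)" .
  have "MKZ n q h x - h x = P * suminf D"
  proof -
    have "MKZ n q h x = P * suminf F" using x MKZ_eq[of x n q h] unfolding P_def F_def w_def t_def by simp
    moreover have "h x = P * (G * h x)" using PG by (simp add: mult.assoc[symmetric])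
    moreover have "suminf D = suminf F - G * h x" using sums_unique[OF sD] by simp
    ultimately show ?thesis by (simp add: right_diff_distrib mult.assoc)
  qed
  then have "\<bar>MKZ n q h x - h x\<bar> = P * \<bar>suminf D\<bar>" using P0 by (simp add: abs_mult)
  also have "\<dots> \<le> P * (G * (e + c / N))" using Dle P0 by (intro mult_left_mono) auto
  also have "\<dots> = e + c / N" using PG by (simp add: mult.assoc[symmetric])
  finally show ?thesis unfolding N_def .
qed

lemma qint_big:
  fixes q :: "nat \<Rightarrow> real"
  assumes q: "\<And>n. 0 < q n \<and> q n \<le> 1" and lim: "q \<longlonglongrightarrow> 1"
  shows "eventually (\<lambda>n. q_int (q n) n \<ge> L) sequentially"
proof -
  define K where "K = nat \<lceil>2 * L\<rceil> + 1"
  have KL: "real K / 2 \<ge> L"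
  proof -
    have "real (nat \<lceil>2 * L\<rceil>) \<ge> 2 * L" by linarith
    then show ?thesis unfolding K_def by simp
  qed
  have "(\<lambda>n. q n ^ K) \<longlonglongrightarrow> 1 ^ K" by (intro tendsto_power lim)
  then have "eventually (\<lambda>n. q n ^ K > 1/2) sequentially"
    by (intro order_tendstoD) auto
  moreover have "eventually (\<lambda>n. n \<ge> K) sequentially" by (rule eventually_ge_at_top)
  ultimately show ?thesis
  proof eventually_elim
    case (elim n)
    have q0: "0 \<le> q n" "q n \<le> 1" using q[of n] by auto
    have "q_int (q n) n = (\<Sum>j<n. q n ^ j)" by (rule q_int_sum)
    also have "\<dots> \<ge> (\<Sum>j<K. q n ^ j)" using elim q0 by (intro sum_mono2) auto
    also have "(\<Sum>j<K. q n ^ j) \<ge> (\<Sum>j<K. q n ^ K)"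
      using q0 by (intro sum_mono power_decreasing) auto
    also have "(\<Sum>j<K. q n ^ K) = real K * q n ^ K" by simp
    also have "real K * q n ^ K \<ge> real K * (1/2)" using elim by (intro mult_left_mono) auto
    finally show ?case using KL by linarith
  qed
qed

lemma mkz_conv:
  fixes q :: "nat \<Rightarrow> real" and h :: "real \<Rightarrow> real"
  assumes hc: "continuous_on {0..1} h"
    and q: "\<And>n. 0 < q n \<and> q n \<le> 1" and lim: "q \<longlonglongrightarrow> 1" and e: "\<epsilon> > 0"
  shows "eventually (\<lambda>n. \<forall>x\<in>{0..1}. \<bar>MKZ n (q n) h x - h x\<bar> < \<epsilon>) sequentially"
proof -
  obtain Bd where Bd: "\<And>s. s \<in> {0..1} \<Longrightarrow> \<bar>h s\<bar> \<le> Bd"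
  proof -
    have "compact (h ` {0..1})" by (rule compact_continuous_image[OF hc compact_Icc])
    then obtain B where "\<forall>y\<in>h ` {0..1}. norm y \<le> B" using compact_imp_bounded bounded_iff by metis
    then show ?thesis using that[of B] by auto
  qed
  have Bd0: "Bd \<ge> 0" using Bd[of 0] by simp
  have uc: "uniformly_continuous_on {0..1} h" by (rule compact_uniformly_continuous[OF hc compact_Icc])
  obtain \<delta> where \<delta>: "\<delta> > 0" and d: "\<And>s x. s \<in> {0..1} \<Longrightarrow> x \<in> {0..1} \<Longrightarrow> dist s x < \<delta> \<Longrightarrow> dist (h s) (h x) < \<epsilon> / 4"
    using uc[unfolded uniformly_continuous_on_def, rule_format, of "\<epsilon>/4"] e by auto
  define c where "c = 2 * Bd / \<delta>\<^sup>2"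
  have c0: "c \<ge> 0" unfolding c_def using Bd0 by simp
  have hmod: "\<bar>h s - h x\<bar> \<le> \<epsilon> / 4 + c * (s - x)\<^sup>2" if s: "s \<in> {0..1}" and x: "x \<in> {0..1}" for s x
  proof (cases "\<bar>s - x\<bar> < \<delta>")
    case True
    then have "\<bar>h s - h x\<bar> < \<epsilon> / 4" using d[OF s x] by (simp add: dist_real_def)
    moreover have "c * (s - x)\<^sup>2 \<ge> 0" using c0 by simp
    ultimately show ?thesis by linarith
  next
    case False
    then have "\<delta>\<^sup>2 \<le> (s - x)\<^sup>2" using \<delta> by (metis abs_le_square_iff abs_of_pos not_less power2_abs)
    then have "c * \<delta>\<^sup>2 \<le> c * (s - x)\<^sup>2" using c0 by (intro mult_left_mono)
    moreover have "c * \<delta>\<^sup>2 = 2 * Bd" unfolding c_def using \<delta> by simp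
    moreover have "\<bar>h s - h x\<bar> \<le> 2 * Bd" using Bd[OF s] Bd[OF x] by linarith
    ultimately show ?thesis using e by linarith
  qed
  have ev1: "eventually (\<lambda>n. q_int (q n) n \<ge> 4 * c / \<epsilon> + 1) sequentially" by (rule qint_big[OF q lim])
  have ev2: "eventually (\<lambda>n. n \<ge> 1) sequentially" by (rule eventually_ge_at_top)
  show ?thesis using ev1 ev2
  proof eventually_elim
    case (elim n)
    have Npos: "q_int (q n) n > 0" using elim(1) c0 e by (smt (verit) divide_nonneg_pos)
    have cN: "c / q_int (q n) n < \<epsilon> / 2"
    proof -
      have "c * 4 < \<epsilon> * q_int (q n) n"
      proof -
        have "\<epsilon> * q_int (q n) n \<ge> \<epsilon> * (4 * c / \<epsilon> + 1)" using elim(1) e by (intro mult_left_mono) auto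
        also have "\<epsilon> * (4 * c / \<epsilon> + 1) = 4 * c + \<epsilon>" using e by (simp add: field_simps)
        finally show ?thesis using e by simp
      qed
      then show ?thesis using Npos e c0 by (simp add: field_simps)
    qed
    show ?case
    proof
      fix x :: real assume x: "x \<in> {0..1}"
      show "\<bar>MKZ n (q n) h x - h x\<bar> < \<epsilon>"
      proof (cases "x = 1")
        case True then show ?thesis using e by (simp add: MKZ_def)
      next
        case False
        have "\<bar>MKZ n (q n) h x - h x\<bar> \<le> \<epsilon> / 4 + c / q_int (q n) n"
          by (rule mkz_bound[where Bd=Bd]) (use q[of n] elim x False Bd hmod c0 in auto)
        then show ?thesis using cN e by linarith
      qed
    qed
  qed
qed

locale frac_setup =
  fixes N :: nat and xs :: "nat \<Rightarrow> real" and \<alpha> :: "nat \<Rightarrow> real \<Rightarrow> real"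
    and h Mh :: "real \<Rightarrow> real" and A Bh Bm :: real
  assumes N: "N \<ge> 2"
    and x1: "xs 1 = 0" and xN: "xs N = 1" and xinc: "\<And>i. 1 \<le> i \<Longrightarrow> i < N \<Longrightarrow> xs i < xs (Suc i)"
    and A: "0 \<le> A" "A < 1" and alpha: "\<And>i x. i \<in> {1..N-1} \<Longrightarrow> x \<in> {0..1} \<Longrightarrow> \<bar>\<alpha> i x\<bar> \<le> A"
    and hB: "\<And>x. x \<in> {0..1} \<Longrightarrow> \<bar>h x\<bar> \<le> Bh" and MhB: "\<And>x. x \<in> {0..1} \<Longrightarrow> \<bar>Mh x\<bar> \<le> Bm"
    and Mh0: "Mh 0 = h 0" and Mh1: "Mh 1 = h 1"
begin

definition P :: "(real \<Rightarrow> real) \<Rightarrow> bool" where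
  "P G \<longleftrightarrow> bounded (G ` {0..1}) \<and> (\<forall>x. x \<notin> {0..1} \<longrightarrow> G x = 0) \<and>
        (\<forall>i \<in> {1..N-1}. \<forall>x \<in> {0..1}.
           G (affine_u xs i x) = h (affine_u xs i x) + \<alpha> i x * (G x - Mh x))"

lemma xs_strict: "1 \<le> i \<Longrightarrow> i < j \<Longrightarrow> j \<le> N \<Longrightarrow> xs i < xs j"
proof (induction j)
  case 0 then show ?case by simp
next
  case (Suc j)
  show ?case
  proof (cases "i = j")
    case True then show ?thesis using xinc Suc.prems by auto
  next
    case False
    then have "xs i < xs j" using Suc by auto
    also have "xs j < xs (Suc j)" using xinc Suc.prems False by auto
    finally show ?thesis .
  qed
qed

lemma xs_mono: "1 \<le> i \<Longrightarrow> i \<le> j \<Longrightarrow> j \<le> N \<Longrightarrow> xs i \<le> xs j"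
  using xs_strict by (cases "i = j") (auto intro: less_imp_le)

lemma xs_range: "1 \<le> i \<Longrightarrow> i \<le> N \<Longrightarrow> xs i \<in> {0..1}"
  using xs_mono[of 1 i] xs_mono[of i N] x1 xN by auto

definition idx :: "real \<Rightarrow> nat" where
  "idx y = Max {i \<in> {1..N-1}. xs i \<le> y}"
definition v :: "real \<Rightarrow> real" where
  "v y = (y - xs (idx y)) / (xs (Suc (idx y)) - xs (idx y))"

abbreviation u where "u i x \<equiv> affine_u xs i x"

lemma u_range: assumes "i \<in> {1..N-1}" "x \<in> {0..1}" shows "u i x \<in> {0..1}" "xs i \<le> u i x" "u i x \<le> xs (Suc i)"
proof -
  have lt: "xs i < xs (Suc i)" using xinc assms(1) N by auto
  have r: "xs i \<in> {0..1}" "xs (Suc i) \<in> {0..1}" using xs_range assms(1) N by auto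
  have "(xs (Suc i) - xs i) * x \<ge> 0" using lt assms(2) by simp
  moreover have "(xs (Suc i) - xs i) * x \<le> (xs (Suc i) - xs i) * 1" using lt assms(2) by (intro mult_left_mono) auto
  ultimately show "xs i \<le> u i x" "u i x \<le> xs (Suc i)" unfolding affine_u_def by auto
  then show "u i x \<in> {0..1}" using r by auto
qed

lemma idx_u:
  assumes i: "i \<in> {1..N-1}" and x: "x \<in> {0..1}"
  shows "(idx (u i x) = i \<and> v (u i x) = x) \<or> (x = 1 \<and> Suc i \<in> {1..N-1} \<and> idx (u i x) = Suc i \<and> v (u i x) = 0)"
proof -
  define y where "y = u i x"
  define S where "S = {k \<in> {1..N-1}. xs k \<le> y}"
  have finS: "finite S" unfolding S_def by simp
  have iS: "i \<in> S" unfolding S_def y_def using u_range[OF i x] i by auto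
  have lt: "xs i < xs (Suc i)" using xinc i N by auto
  have vform: "v y = (y - xs k) / (xs (Suc k) - xs k)" if "idx y = k" for k
    unfolding v_def that ..
  show ?thesis
  proof (cases "x < 1")
    case True
    have ylt: "y < xs (Suc i)"
    proof -
      have "(xs (Suc i) - xs i) * x < (xs (Suc i) - xs i) * 1" using lt True by (intro mult_strict_left_mono) auto
      then show ?thesis unfolding y_def affine_u_def by simp
    qed
    have "Max S = i"
    proof (rule Max_eqI[OF finS _ iS])
      fix k assume k: "k \<in> S"
      show "k \<le> i"
      proof (rule ccontr)
        assume "\<not> k \<le> i"
        then have "xs (Suc i) \<le> xs k" using k unfolding S_def by (intro xs_mono) auto
        then show False using k ylt unfolding S_def by auto
      qed
    qed
    then have ix: "idx y = i" unfolding idx_def S_def .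
    have "v y = (y - xs i) / (xs (Suc i) - xs i)" by (rule vform[OF ix])
    also have "\<dots> = x" unfolding y_def affine_u_def using lt by (simp add: field_simps)
    finally have "v y = x" .
    then show ?thesis using ix y_def by simp
  next
    case False
    then have x1': "x = 1" using x by auto
    have yeq: "y = xs (Suc i)" unfolding y_def affine_u_def x1' by simp
    show ?thesis
    proof (cases "Suc i \<le> N - 1")
      case True
      have siS: "Suc i \<in> S" unfolding S_def using True yeq by auto
      have "Max S = Suc i"
      proof (rule Max_eqI[OF finS _ siS])
        fix k assume k: "k \<in> S"
        show "k \<le> Suc i"
        proof (rule ccontr)
          assume "\<not> k \<le> Suc i"
          then have "xs (Suc i) < xs k" using k True unfolding S_def by (intro xs_strict) auto
          then show False using k yeq unfolding S_def by auto
        qed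
      qed
      then have ix: "idx y = Suc i" unfolding idx_def S_def .
      have "v y = (y - xs (Suc i)) / (xs (Suc (Suc i)) - xs (Suc i))" by (rule vform[OF ix])
      then have "v y = 0" unfolding yeq by simp
      then show ?thesis using ix y_def x1' True by auto
    next
      case False
      then have iN: "Suc i = N" using i by auto
      have "Max S = i"
      proof (rule Max_eqI[OF finS _ iS])
        fix k assume k: "k \<in> S"
        then show "k \<le> i" using iN unfolding S_def by auto
      qed
      then have ix: "idx y = i" unfolding idx_def S_def .
      have "v y = (y - xs i) / (xs (Suc i) - xs i)" by (rule vform[OF ix])
      then have "v y = x" unfolding yeq x1' using lt by simp
      then show ?thesis using ix y_def by simp
    qed
  qed
qed

lemma cover:
  assumes y: "y \<in> {0..1}"
  shows "idx y \<in> {1..N-1}" "v y \<in> {0..1}" "u (idx y) (v y) = y"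
proof -
  define S where "S = {k \<in> {1..N-1}. xs k \<le> y}"
  have finS: "finite S" unfolding S_def by simp
  have 1: "1 \<in> S" unfolding S_def using x1 y N by auto
  have iS: "idx y \<in> S" unfolding idx_def S_def[symmetric] using Max_in[OF finS] 1 by auto
  then show ii: "idx y \<in> {1..N-1}" unfolding S_def by auto
  define i where "i = idx y"
  have xi: "xs i \<le> y" using iS unfolding S_def i_def by auto
  have lt: "xs i < xs (Suc i)" using xinc ii N unfolding i_def by auto
  have yi: "y \<le> xs (Suc i)"
  proof (cases "Suc i \<le> N - 1")
    case True
    show ?thesis
    proof (rule ccontr)
      assume "\<not> ?thesis"
      then have "Suc i \<in> S" unfolding S_def using True by auto
      then have "Suc i \<le> Max S" using finS by simp
      then show False unfolding i_def idx_def S_def by simp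
    qed
  next
    case False
    then have "Suc i = N" using ii unfolding i_def by auto
    then show ?thesis using y xN by auto
  qed
  have vv: "v y = (y - xs i) / (xs (Suc i) - xs i)" unfolding v_def i_def ..
  show "v y \<in> {0..1}" unfolding vv using xi yi lt by (auto simp: field_simps)
  show "u (idx y) (v y) = y" unfolding vv i_def[symmetric] affine_u_def using lt by simp
qed

end

context frac_setup
begin

lemma Bh0: "Bh \<ge> 0" using hB[of 0] by simp
lemma Bm0: "Bm \<ge> 0" using MhB[of 0] by simp

lemma P_bdd:
  assumes "P G" obtains B where "\<And>y. y \<in> {0..1} \<Longrightarrow> \<bar>G y\<bar> \<le> B"
proof -
  from assms have "bounded (G ` {0..1})" unfolding P_def by simp
  then obtain a where "\<forall>x\<in>G ` {0..1}. norm x \<le> a" unfolding bounded_iff by auto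
  then show ?thesis using that[of a] by auto
qed

lemma P_eq_v:
  assumes PG: "P G" and y: "y \<in> {0..1}"
  shows "G y = h y + \<alpha> (idx y) (v y) * (G (v y) - Mh (v y))"
  using PG cover[OF y] unfolding P_def by metis

lemma geo_bound:
  fixes E :: "real \<Rightarrow> real"
  assumes E: "\<And>y::real. y \<in> {0..1} \<Longrightarrow> E y \<le> A * (E (v y) + \<eta>)" and B: "\<And>y::real. y \<in> {0..1} \<Longrightarrow> E y \<le> B1"
    and eta: "\<eta> \<ge> 0"
  shows "\<And>y::real. y \<in> {0..1} \<Longrightarrow> E y \<le> A * \<eta> / (1 - A)"
proof -
  have k: "E y \<le> A ^ k * B1 + A * \<eta> / (1 - A)" if "y \<in> {0..1}" for k and y :: real
    using that
  proof (induction k arbitrary: y)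
    case 0
    have "A * \<eta> / (1 - A) \<ge> 0" using A eta by simp
    then show ?case using B[OF 0] by simp
  next
    case (Suc k)
    have vy: "v y \<in> {0..1}" using cover(2)[OF Suc.prems] .
    have "E y \<le> A * (E (v y) + \<eta>)" by (rule E[OF Suc.prems])
    also have "\<dots> \<le> A * ((A ^ k * B1 + A * \<eta> / (1 - A)) + \<eta>)"
      using Suc.IH[OF vy] A by (intro mult_left_mono add_right_mono) auto
    also have "\<dots> = A ^ Suc k * B1 + A * \<eta> / (1 - A)" using A by (simp add: field_simps)
    finally show ?case .
  qed
  fix y :: real assume y: "y \<in> {0..1}"
  have lim: "(\<lambda>k. A ^ k * B1 + A * \<eta> / (1 - A)) \<longlonglongrightarrow> 0 * B1 + A * \<eta> / (1 - A)"
    using A by (intro tendsto_intros LIMSEQ_power_zero) auto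
  show "E y \<le> A * \<eta> / (1 - A)"
    using tendsto_lowerbound[OF lim, of "E y"] k[OF y] by simp
qed

lemma P_bound:
  assumes PG: "P G" and eta: "\<And>x. x \<in> {0..1} \<Longrightarrow> \<bar>h x - Mh x\<bar> \<le> \<eta>"
  shows "\<And>y. y \<in> {0..1} \<Longrightarrow> \<bar>G y - h y\<bar> \<le> A * \<eta> / (1 - A)"
proof -
  obtain B0 where B0: "\<And>y. y \<in> {0..1} \<Longrightarrow> \<bar>G y\<bar> \<le> B0"
    using P_bdd[OF PG] by metis
  have e0: "\<eta> \<ge> 0" using eta[of 0] by simp
  have bB: "\<bar>G y - h y\<bar> \<le> B0 + Bh" if "y \<in> {0..1}" for y
    using B0[OF that] hB[OF that] by linarith
  have st: "\<bar>G y - h y\<bar> \<le> A * (\<bar>G (v y) - h (v y)\<bar> + \<eta>)" if y: "y \<in> {0..1}" for y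
  proof -
    have vy: "v y \<in> {0..1}" "idx y \<in> {1..N-1}" using cover[OF y] by auto
    have "\<bar>G y - h y\<bar> = \<bar>\<alpha> (idx y) (v y)\<bar> * \<bar>G (v y) - Mh (v y)\<bar>"
      using P_eq_v[OF PG y] by (simp add: abs_mult)
    also have "\<dots> \<le> A * (\<bar>G (v y) - h (v y)\<bar> + \<eta>)"
    proof (rule mult_mono)
      show "\<bar>\<alpha> (idx y) (v y)\<bar> \<le> A" using alpha vy by auto
      show "\<bar>G (v y) - Mh (v y)\<bar> \<le> \<bar>G (v y) - h (v y)\<bar> + \<eta>" using eta[OF vy(1)] by linarith
    qed (use A in auto)
    finally show ?thesis .
  qed
  show "\<And>y. y \<in> {0..1} \<Longrightarrow> \<bar>G y - h y\<bar> \<le> A * \<eta> / (1 - A)"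
    by (rule geo_bound[where E = "\<lambda>y. \<bar>G y - h y\<bar>", OF st bB e0])
qed

lemma P_unique:
  assumes P1: "P G1" and P2: "P G2"
  shows "G1 = G2"
proof
  fix y
  show "G1 y = G2 y"
  proof (cases "y \<in> {0..1}")
    case False then show ?thesis using P1 P2 unfolding P_def by auto
  next
    case True
    obtain B1 where B1: "\<And>y. y \<in> {0..1} \<Longrightarrow> \<bar>G1 y\<bar> \<le> B1"
      using P_bdd[OF P1] by metis
    obtain B2 where B2: "\<And>y. y \<in> {0..1} \<Longrightarrow> \<bar>G2 y\<bar> \<le> B2"
      using P_bdd[OF P2] by metis
    have bB: "\<bar>G1 y - G2 y\<bar> \<le> B1 + B2" if "y \<in> {0..1}" for y
      using B1[OF that] B2[OF that] by linarith
    have st: "\<bar>G1 y - G2 y\<bar> \<le> A * (\<bar>G1 (v y) - G2 (v y)\<bar> + 0)" if y: "y \<in> {0..1}" for y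
    proof -
      have vy: "v y \<in> {0..1}" "idx y \<in> {1..N-1}" using cover[OF y] by auto
      have "\<bar>G1 y - G2 y\<bar> = \<bar>\<alpha> (idx y) (v y)\<bar> * \<bar>G1 (v y) - G2 (v y)\<bar>"
        using P_eq_v[OF P1 y] P_eq_v[OF P2 y] by (simp add: abs_mult[symmetric] algebra_simps)
      also have "\<dots> \<le> A * \<bar>G1 (v y) - G2 (v y)\<bar>"
        using alpha vy by (intro mult_right_mono) auto
      finally show ?thesis by simp
    qed
    have "\<bar>G1 y - G2 y\<bar> \<le> A * 0 / (1 - A)"
      by (rule geo_bound[where E = "\<lambda>y. \<bar>G1 y - G2 y\<bar>", OF st bB order_refl True])
    then show ?thesis by simp
  qed
qed

end

context frac_setup
begin

definition T :: "(real \<Rightarrow> real) \<Rightarrow> real \<Rightarrow> real" where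
  "T g y = (if y \<in> {0..1} then h y + \<alpha> (idx y) (v y) * (g (v y) - Mh (v y)) else 0)"

definition g0 :: "real \<Rightarrow> real" where "g0 y = (if y \<in> {0..1} then h y else 0)"

definition gk :: "nat \<Rightarrow> real \<Rightarrow> real" where "gk k = (T ^^ k) g0"

lemma T_out: "y \<notin> {0..1} \<Longrightarrow> T g y = 0" unfolding T_def by (rule if_not_P)
lemma T_in: "y \<in> {0..1} \<Longrightarrow> T g y = h y + \<alpha> (idx y) (v y) * (g (v y) - Mh (v y))" by (simp add: T_def)
lemma g0_out: "y \<notin> {0..1} \<Longrightarrow> g0 y = 0" unfolding g0_def by (rule if_not_P)
lemma gk_0: "gk 0 = g0" by (simp add: gk_def)

lemma gk_Suc: "gk (Suc k) = T (gk k)" by (simp add: gk_def)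

lemma gk_diff: "\<bar>gk (Suc k) y - gk k y\<bar> \<le> (Bh + Bm) * A ^ k"
proof (induction k arbitrary: y)
  case 0
  show ?case
  proof (cases "y \<in> {0..1}")
    case True
    have vy: "v y \<in> {0..1}" "idx y \<in> {1..N-1}" using cover[OF True] by auto
    have "\<bar>gk 1 y - gk 0 y\<bar> = \<bar>\<alpha> (idx y) (v y)\<bar> * \<bar>h (v y) - Mh (v y)\<bar>"
      using True vy by (simp add: gk_def T_def g0_def abs_mult)
    also have "\<dots> \<le> 1 * (Bh + Bm)"
    proof (rule mult_mono)
      show "\<bar>\<alpha> (idx y) (v y)\<bar> \<le> 1" using alpha[OF vy(2) vy(1)] A by simp
      show "\<bar>h (v y) - Mh (v y)\<bar> \<le> Bh + Bm" using hB[OF vy(1)] MhB[OF vy(1)] by linarith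
    qed auto
    finally show ?thesis by simp
  next
    case False then show ?thesis using Bh0 Bm0 by (simp add: gk_Suc[of 0, simplified] gk_0 T_out g0_out)
  qed
next
  case (Suc k)
  show ?case
  proof (cases "y \<in> {0..1}")
    case True
    have vy: "v y \<in> {0..1}" "idx y \<in> {1..N-1}" using cover[OF True] by auto
    have "\<bar>gk (Suc (Suc k)) y - gk (Suc k) y\<bar> = \<bar>\<alpha> (idx y) (v y)\<bar> * \<bar>gk (Suc k) (v y) - gk k (v y)\<bar>"
      using True unfolding gk_Suc[of "Suc k"] gk_Suc[of k] by (simp add: T_def abs_mult[symmetric] algebra_simps)
    also have "\<dots> \<le> A * ((Bh + Bm) * A ^ k)"
      using alpha[OF vy(2) vy(1)] Suc.IH[of "v y"] by (intro mult_mono) auto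
    finally show ?thesis by (simp add: algebra_simps)
  next
    case False then show ?thesis using Bh0 Bm0 A by (simp add: gk_Suc T_out)
  qed
qed

definition Gf :: "real \<Rightarrow> real" where
  "Gf y = g0 y + (\<Sum>k. gk (Suc k) y - gk k y)"

lemma summable_geo: "summable (\<lambda>k. (Bh + Bm) * A ^ k)"
  using A by (intro summable_mult summable_geometric) auto

lemma summable_diff: "summable (\<lambda>k. gk (Suc k) y - gk k y)"
  by (rule summable_comparison_test'[OF summable_geo]) (use gk_diff in auto)

lemma gk_lim: "(\<lambda>k. gk k y) \<longlonglongrightarrow> Gf y"
proof -
  have "(\<lambda>n. \<Sum>k<n. gk (Suc k) y - gk k y) \<longlonglongrightarrow> (\<Sum>k. gk (Suc k) y - gk k y)"
    by (rule summable_LIMSEQ[OF summable_diff])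
  then have "(\<lambda>n. g0 y + (\<Sum>k<n. gk (Suc k) y - gk k y)) \<longlonglongrightarrow> Gf y"
    unfolding Gf_def by (intro tendsto_add tendsto_const)
  moreover have "g0 y + (\<Sum>k<n. gk (Suc k) y - gk k y) = gk n y" for n
    using sum_lessThan_telescope[of "\<lambda>k. gk k y" n] by (simp add: gk_0)
  ultimately show ?thesis by simp
qed

lemma Gf_fix: "T Gf y = Gf y"
proof -
  have "(\<lambda>k. gk (Suc k) y) \<longlonglongrightarrow> Gf y" using gk_lim by (rule LIMSEQ_Suc)
  moreover have "(\<lambda>k. gk (Suc k) y) \<longlonglongrightarrow> T Gf y"
  proof (cases "y \<in> {0..1}")
    case True
    have "(\<lambda>k. h y + \<alpha> (idx y) (v y) * (gk k (v y) - Mh (v y))) \<longlonglongrightarrow> h y + \<alpha> (idx y) (v y) * (Gf (v y) - Mh (v y))"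
      by (intro tendsto_intros gk_lim)
    then show ?thesis using True by (simp add: gk_Suc T_def)
  next
    case False then show ?thesis by (simp add: gk_Suc T_out)
  qed
  ultimately show ?thesis using LIMSEQ_unique by blast
qed

lemma Gf_bdd: "\<bar>Gf y\<bar> \<le> Bh + (Bh + Bm) / (1 - A)"
proof -
  have "\<bar>\<Sum>k. gk (Suc k) y - gk k y\<bar> \<le> (\<Sum>k. \<bar>gk (Suc k) y - gk k y\<bar>)"
    by (rule summable_rabs) (rule summable_comparison_test'[OF summable_geo], use gk_diff in auto)
  also have "\<dots> \<le> (\<Sum>k. (Bh + Bm) * A ^ k)"
    by (rule suminf_le[OF gk_diff _ summable_geo]) (rule summable_comparison_test'[OF summable_geo], use gk_diff in auto)
  also have "\<dots> = (Bh + Bm) / (1 - A)"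
    using A by (simp add: suminf_mult suminf_geometric divide_inverse)
  finally have "\<bar>\<Sum>k. gk (Suc k) y - gk k y\<bar> \<le> (Bh + Bm) / (1 - A)" .
  moreover have "\<bar>g0 y\<bar> \<le> Bh" using hB Bh0 by (simp add: g0_def)
  ultimately show ?thesis unfolding Gf_def by linarith
qed

lemma P_exists: "P Gf"
proof -
  have out: "Gf y = 0" if "y \<notin> {0..1}" for y
    using Gf_fix[of y] T_out[OF that] by simp
  have eqv: "Gf y = h y + \<alpha> (idx y) (v y) * (Gf (v y) - Mh (v y))" if "y \<in> {0..1}" for y
    using Gf_fix[of y] that by (simp add: T_def)
  have N1: "1 \<in> {1..N-1}" "N - 1 \<in> {1..N-1}" using N by auto
  have u10: "u 1 0 = 0" using x1 by (simp add: affine_u_def)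
  have G0: "Gf 0 = h 0"
  proof -
    have iv: "idx 0 = 1" "v 0 = 0" using idx_u[OF N1(1), of 0] u10 by auto
    have "Gf 0 = h 0 + \<alpha> 1 0 * (Gf 0 - h 0)" using eqv[of 0] iv Mh0 by simp
    then have "(1 - \<alpha> 1 0) * (Gf 0 - h 0) = 0" by (simp add: algebra_simps)
    moreover have "\<alpha> 1 0 \<noteq> 1" using alpha[OF N1(1), of 0] A by auto
    ultimately show ?thesis by simp
  qed
  have uN1: "u (N - 1) 1 = 1" using xN N by (simp add: affine_u_def)
  have G1: "Gf 1 = h 1"
  proof -
    have "\<not> Suc (N - 1) \<in> {1..N-1}" using N by auto
    then have iv: "idx 1 = N - 1" "v 1 = 1" using idx_u[OF N1(2), of 1] uN1 by auto
    have "Gf 1 = h 1 + \<alpha> (N - 1) 1 * (Gf 1 - h 1)" using eqv[of 1] iv Mh1 by simp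
    then have "(1 - \<alpha> (N - 1) 1) * (Gf 1 - h 1) = 0" by (simp add: algebra_simps)
    moreover have "\<alpha> (N - 1) 1 \<noteq> 1" using alpha[OF N1(2), of 1] A by auto
    ultimately show ?thesis by simp
  qed
  have bdd: "bounded (Gf ` {0..1})"
    unfolding bounded_iff using Gf_bdd by (intro exI[of _ "Bh + (Bh + Bm) / (1 - A)"]) auto
  have eqs: "Gf (u i x) = h (u i x) + \<alpha> i x * (Gf x - Mh x)" if i: "i \<in> {1..N-1}" and x: "x \<in> {0..1}" for i x
  proof -
    have y: "u i x \<in> {0..1}" by (rule u_range[OF i x])
    from idx_u[OF i x] show ?thesis
    proof
      assume "idx (u i x) = i \<and> v (u i x) = x"
      then show ?thesis using eqv[OF y] by simp
    next
      assume c: "x = 1 \<and> Suc i \<in> {1..N-1} \<and> idx (u i x) = Suc i \<and> v (u i x) = 0"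
      then have c1: "x = 1" and c2: "v (u i x) = 0" by auto
      have "Gf (u i x) = h (u i x) + \<alpha> (idx (u i x)) (v (u i x)) * (Gf (v (u i x)) - Mh (v (u i x)))"
        by (rule eqv[OF y])
      also have "\<dots> = h (u i x)" unfolding c2 using G0 Mh0 by simp
      also have "\<dots> = h (u i x) + \<alpha> i x * (Gf x - Mh x)" unfolding c1 using G1 Mh1 by simp
      finally show ?thesis .
    qed
  qed
  show ?thesis unfolding P_def using bdd out eqs by blast
qed

lemma ex1_P: "\<exists>!G. P G" using P_exists P_unique by blast

lemma the_P: "P (THE G. P G)" using theI'[OF ex1_P] .

end

lemma MKZ_at_0:
  assumes q: "0 \<le> q" "q \<le> 1"
  shows "MKZ n q h 0 = h 0"
proof -
  have "(\<lambda>k. Cq q n k * 0 ^ k * h (tq q n k)) = (\<lambda>k. if k = 0 then h 0 else 0)"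
    using q by (auto simp: fun_eq_iff)
  then have "(\<lambda>k. Cq q n k * 0 ^ k * h (tq q n k)) sums h 0" using sums_single[of 0 "\<lambda>_. h 0"] by simp
  then have "(\<Sum>k. Cq q n k * 0 ^ k * h (tq q n k)) = h 0" by (rule sums_unique[symmetric])
  moreover have "Pn q n 0 = 1" by (simp add: Pn_def)
  ultimately show ?thesis using MKZ_eq[of 0 n q h] by simp
qed

theorem theorem5p1:
  fixes N :: nat and xs :: "nat \<Rightarrow> real" and q :: "nat \<Rightarrow> real"
    and \<alpha> :: "nat \<Rightarrow> real \<Rightarrow> real" and lam :: "nat \<Rightarrow> real"
  assumes N: "N \<ge> 2"
    and part: "xs 1 = 0" "xs N = 1" "\<And>i. 1 \<le> i \<Longrightarrow> i < N \<Longrightarrow> xs i < xs (Suc i)"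
    and q_range: "\<And>n. 0 < q n \<and> q n \<le> 1"
    and q_lim: "q \<longlonglongrightarrow> 1"
    and alpha_norm: "\<And>i. i \<in> {1..N-1} \<Longrightarrow>
          bounded ((\<alpha> i) ` {0..1}) \<and> (SUP x\<in>{0..1}. \<bar>\<alpha> i x\<bar>) < 1"
    and lam_pos: "\<And>i. i \<ge> 1 \<Longrightarrow> lam i > 0"
    and lam_distinct: "inj_on lam {1..}"
    and lam_div: "\<not> summable (\<lambda>i. lam (Suc i) / ((lam (Suc i))\<^sup>2 + 1))"
    and f_cont: "continuous_on {0..1} f"
    and eps: "\<epsilon> > 0"
  shows "\<exists>n\<ge>1. \<exists>m\<ge>1. \<exists>c :: nat \<Rightarrow> real.
           \<forall>x\<in>{0..1::real}. \<bar>f x - (c 0 + (\<Sum>i = 1..m.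
               c i * fractal_fun N xs \<alpha> (q n) n (\<lambda>t. t powr lam i) x))\<bar> < \<epsilon>"
proof -
  obtain m c where m1: "m \<ge> 1" and mc: "\<forall>x\<in>{0..1}. \<bar>f x - (c 0 + (\<Sum>i=1..m. c i * x powr lam i))\<bar> < \<epsilon> / 2"
    using muntz_dense[OF lam_pos lam_distinct lam_div f_cont, of "\<epsilon>/2"] eps by auto
  define S where "S i = (SUP x\<in>{0..1}. \<bar>\<alpha> i x\<bar>)" for i
  define A where "A = Max (S ` {1..N-1})"
  have N1: "1 \<in> {1..N-1}" using N by auto
  have finI: "finite (S ` {1..N-1})" by simp
  have neI: "S ` {1..N-1} \<noteq> {}" using N1 by auto
  have aS: "\<bar>\<alpha> i x\<bar> \<le> S i" if i: "i \<in> {1..N-1}" and x: "x \<in> {0..1}" for i x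
  proof -
    obtain B where "\<forall>y\<in>\<alpha> i ` {0..1}. norm y \<le> B" using alpha_norm[OF i] bounded_iff by metis
    then have "bdd_above ((\<lambda>x. \<bar>\<alpha> i x\<bar>) ` {0..1})" by (intro bdd_aboveI[of _ B]) auto
    then show ?thesis unfolding S_def using x by (intro cSUP_upper) auto
  qed
  have SA: "S i \<le> A" if "i \<in> {1..N-1}" for i unfolding A_def using finI that by simp
  have alphaA: "\<bar>\<alpha> i x\<bar> \<le> A" if "i \<in> {1..N-1}" "x \<in> {0..1}" for i x
    using aS[OF that] SA[OF that(1)] by linarith
  have A1: "A < 1"
  proof -
    have "A \<in> S ` {1..N-1}" unfolding A_def using Max_in[OF finI neI] .
    then show ?thesis using alpha_norm unfolding S_def by auto
  qed
  have A0: "A \<ge> 0" using alphaA[OF N1, of 0] by simp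
  define C where "C = (\<Sum>i=1..m. \<bar>c i\<bar>) + 1"
  have C1: "C \<ge> 1" unfolding C_def by (simp add: sum_nonneg)
  define \<eta> where "\<eta> = min 1 (\<epsilon> * (1 - A) / (4 * C))"
  have \<eta>0: "\<eta> > 0" unfolding \<eta>_def using eps A1 C1 by simp
  have \<eta>1: "\<eta> \<le> 1" unfolding \<eta>_def by simp
  have \<eta>bd: "A * \<eta> / (1 - A) \<le> \<epsilon> / (4 * C)"
  proof -
    have "A * \<eta> \<le> 1 * \<eta>" using A1 \<eta>0 by (intro mult_right_mono) auto
    also have "\<eta> \<le> \<epsilon> * (1 - A) / (4 * C)" unfolding \<eta>_def by simp
    finally have "A * \<eta> \<le> \<epsilon> * (1 - A) / (4 * C)" by simp
    then show ?thesis using A1 C1 by (simp add: field_simps)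
  qed
  define h where "h i = (\<lambda>t::real. t powr lam i)" for i
  have hc: "continuous_on {0..1} (h i)" if "i \<in> {1..m}" for i
  proof -
    have "lam i > 0" using lam_pos that by auto
    then show ?thesis unfolding h_def by (intro continuous_on_powr') (auto intro: continuous_intros)
  qed
  have ev: "eventually (\<lambda>n. \<forall>i\<in>{1..m}. \<forall>x\<in>{0..1}. \<bar>MKZ n (q n) (h i) x - h i x\<bar> < \<eta>) sequentially"
    using mkz_conv[OF hc q_range q_lim \<eta>0] by (intro eventually_ball_finite) auto
  obtain n where n1: "n \<ge> 1" and nM: "\<forall>i\<in>{1..m}. \<forall>x\<in>{0..1}. \<bar>MKZ n (q n) (h i) x - h i x\<bar> < \<eta>"
    using eventually_conj[OF ev eventually_ge_at_top[of 1]] by (auto dest: eventually_happens)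
  have frac: "\<bar>fractal_fun N xs \<alpha> (q n) n (h i) x - h i x\<bar> \<le> \<epsilon> / (4 * C)"
    if i: "i \<in> {1..m}" and x: "x \<in> {0..1}" for i x
  proof -
    have li: "lam i > 0" using lam_pos i by auto
    have hB: "\<bar>h i y\<bar> \<le> 1" if "y \<in> {0..1}" for y
      using that li unfolding h_def by (auto simp: powr_le1)
    have MB: "\<bar>MKZ n (q n) (h i) y\<bar> \<le> 1 + \<eta>" if "y \<in> {0..1}" for y
      using hB[OF that] nM i that by (smt (verit))
    have qn: "0 \<le> q n" "q n \<le> 1" using q_range[of n] by auto
    interpret F: frac_setup N xs \<alpha> "h i" "MKZ n (q n) (h i)" A 1 "1 + \<eta>"
    proof
      show "N \<ge> 2" by (rule N)
      show "xs 1 = 0" "xs N = 1" by (rule part(1), rule part(2))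
      show "\<And>i. 1 \<le> i \<Longrightarrow> i < N \<Longrightarrow> xs i < xs (Suc i)" by (rule part(3))
      show "0 \<le> A" "A < 1" by (rule A0, rule A1)
      show "\<And>i x. i \<in> {1..N-1} \<Longrightarrow> x \<in> {0..1} \<Longrightarrow> \<bar>\<alpha> i x\<bar> \<le> A" by (rule alphaA)
      show "\<And>x. x \<in> {0..1} \<Longrightarrow> \<bar>h i x\<bar> \<le> 1" by (rule hB)
      show "\<And>x. x \<in> {0..1} \<Longrightarrow> \<bar>MKZ n (q n) (h i) x\<bar> \<le> 1 + \<eta>" by (rule MB)
      show "MKZ n (q n) (h i) 0 = h i 0" by (rule MKZ_at_0[OF qn])
      show "MKZ n (q n) (h i) 1 = h i 1" by (simp add: MKZ_def)
    qed
    have eqF: "fractal_fun N xs \<alpha> (q n) n (h i) = (THE G. F.P G)"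
      unfolding fractal_fun_def F.P_def ..
    have "\<bar>(THE G. F.P G) x - h i x\<bar> \<le> A * \<eta> / (1 - A)"
      by (rule F.P_bound[OF F.the_P _ x]) (use nM i in \<open>auto simp: abs_minus_commute less_imp_le\<close>)
    then show ?thesis unfolding eqF using \<eta>bd by linarith
  qed
  show ?thesis
  proof (rule exI[of _ n], rule conjI[OF n1], rule exI[of _ m], rule conjI[OF m1], rule exI[of _ c], rule ballI)
    fix x :: real assume x: "x \<in> {0..1}"
    define Fr where "Fr i = fractal_fun N xs \<alpha> (q n) n (h i) x" for i
    have "\<bar>(\<Sum>i=1..m. c i * Fr i) - (\<Sum>i=1..m. c i * x powr lam i)\<bar> = \<bar>\<Sum>i=1..m. c i * (Fr i - h i x)\<bar>"
      unfolding h_def by (simp add: sum_subtractf right_diff_distrib)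
    also have "\<dots> \<le> (\<Sum>i=1..m. \<bar>c i * (Fr i - h i x)\<bar>)" by (rule sum_abs)
    also have "\<dots> \<le> (\<Sum>i=1..m. \<bar>c i\<bar> * (\<epsilon> / (4 * C)))"
      unfolding abs_mult Fr_def by (intro sum_mono mult_left_mono frac x) auto
    also have "\<dots> = (C - 1) * (\<epsilon> / (4 * C))" by (simp only: sum_distrib_right[symmetric]) (simp add: C_def)
    also have "\<dots> < \<epsilon> / 2" using C1 eps by (simp add: field_simps add_pos_pos)
    finally have "\<bar>(\<Sum>i=1..m. c i * Fr i) - (\<Sum>i=1..m. c i * x powr lam i)\<bar> < \<epsilon> / 2" .
    moreover have "\<bar>f x - (c 0 + (\<Sum>i=1..m. c i * x powr lam i))\<bar> < \<epsilon> / 2" using mc x by auto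
    moreover have "(\<Sum>i=1..m. c i * Fr i) = (\<Sum>i=1..m. c i * fractal_fun N xs \<alpha> (q n) n (\<lambda>t. t powr lam i) x)"
      unfolding Fr_def h_def ..
    ultimately show "\<bar>f x - (c 0 + (\<Sum>i = 1..m. c i * fractal_fun N xs \<alpha> (q n) n (\<lambda>t. t powr lam i) x))\<bar> < \<epsilon>"
      by linarith
  qed
qed

end
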